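(* Let $\mathcal{G}=(\mathcal{P},\mathcal{L})$ be a Fischer space of symplectic type, let $R$ be a commutative ring with $2=0$, $A=M_R(\mathcal{G},1)$, and let $\ell=\{a,b,c\}$ be a line. Let $\mathcal{P}_0$ be the set of points not on $\ell$ and not collinear with any of $a,b,c$, and let $\mathcal{P}_2$ be the set of points collinear with exactly two points of $\ell$. Then $A=A^\ell_0\oplus A^\ell_1$, where $A^\ell_0,A^\ell_1$ are the eigenspaces of $\operatorname{ad}_\ell$ for eigenvalues $0$ and $1$, and \[ A^\ell_0=\langle a,b,c\rangle\oplus\langle \pi\mid \pi \text{ a complete quadrilateral with } \ell\subset\pi\rangle\oplus\langle w\mid w\in\mathcal{P}_0\rangle,\qquad A^\ell_1=\langle \ell z\mid z\in\mathcal{P}_2\rangle. \]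
   Context: A 3-transposition group is a pair $(G,D)$ where $D$ is a conjugacy class of involutions generating $G$ with $de$ of order at most $3$ for all $d,e\in D$. Its Fischer space $\mathcal{G}=(\mathcal{P},\mathcal{L})$ has $\mathcal{P}=D$ and as lines the $3$-subsets consisting of the three involutions of a subgroup isomorphic to $\mathrm{Sym}(3)$. Distinct points on a common line are collinear ($p\sim q$), and $p\wedge q$ is the third point. A subspace is a nonempty subset closed under $\wedge$. The subspace generated by two distinct intersecting lines is either a complete quadrilateral (6 points, 4 lines, any two lines meeting in one point, each point on two lines) or an affine plane of order $3$; $\mathcal{G}$ is of symplectic type if it is always a complete quadrilateral. The nilpotent Matsuo algebra $A=M_R(\mathcal{G},1)$ is the free $R$-module with basis $\mathcal{P}$ and commutative bilinear product $p\cdot q=0$ if $p=q$ or $p\not\sim q$, $p\cdot q=p+q+p\wedge q$ if $p\sim q$. A line $\ell$ is identified with the sum of its points in $A$, and a complete quadrilateral $\pi\subseteq\mathcal{P}$ (a subspace isomorphic to the complete quadrilateral) with the sum of its $6$ points; $\operatorname{ad}_\ell(v)=\ell v$. Angle brackets denote $R$-linear span. *)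

theory Defs
  imports "HOL-Algebra.Sym_Groups" "HOL-Algebra.Multiplicative_Group" "HOL-Algebra.Generated_Groups"
begin

definition three_transposition_group :: "('g, 'b) monoid_scheme \<Rightarrow> 'g set \<Rightarrow> bool" where
  "three_transposition_group G D \<longleftrightarrow>
     group G \<and> D \<subseteq> carrier G \<and>
     (\<exists>d\<in>carrier G. D = {g \<otimes>\<^bsub>G\<^esub> d \<otimes>\<^bsub>G\<^esub> inv\<^bsub>G\<^esub> g | g. g \<in> carrier G}) \<and>
     (\<forall>d\<in>D. d \<noteq> \<one>\<^bsub>G\<^esub> \<and> d \<otimes>\<^bsub>G\<^esub> d = \<one>\<^bsub>G\<^esub>) \<and>
     generate G D = carrier G \<and>
     (\<forall>d\<in>D. \<forall>e\<in>D. group.ord G (d \<otimes>\<^bsub>G\<^esub> e) \<noteq> 0 \<and> group.ord G (d \<otimes>\<^bsub>G\<^esub> e) \<le> 3)"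

definition fischer_lines :: "('g, 'b) monoid_scheme \<Rightarrow> 'g set \<Rightarrow> 'g set set" where
  "fischer_lines G D = {l. l \<subseteq> D \<and> card l = 3 \<and>
     (\<exists>H. subgroup H G \<and> (G\<lparr>carrier := H\<rparr>) \<cong> sym_group 3 \<and>
          l = {h \<in> H. h \<noteq> \<one>\<^bsub>G\<^esub> \<and> h \<otimes>\<^bsub>G\<^esub> h = \<one>\<^bsub>G\<^esub>})}"

definition fcollinear :: "('g, 'b) monoid_scheme \<Rightarrow> 'g set \<Rightarrow> 'g \<Rightarrow> 'g \<Rightarrow> bool" where
  "fcollinear G D p q \<longleftrightarrow> p \<noteq> q \<and> (\<exists>l\<in>fischer_lines G D. p \<in> l \<and> q \<in> l)"

definition fwedge :: "('g, 'b) monoid_scheme \<Rightarrow> 'g set \<Rightarrow> 'g \<Rightarrow> 'g \<Rightarrow> 'g" where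
  "fwedge G D p q = (THE r. \<exists>l\<in>fischer_lines G D. l = {p, q, r} \<and> r \<noteq> p \<and> r \<noteq> q)"

definition fsubspace :: "('g, 'b) monoid_scheme \<Rightarrow> 'g set \<Rightarrow> 'g set \<Rightarrow> bool" where
  "fsubspace G D S \<longleftrightarrow> S \<noteq> {} \<and> S \<subseteq> D \<and>
     (\<forall>p\<in>S. \<forall>q\<in>S. fcollinear G D p q \<longrightarrow> fwedge G D p q \<in> S)"

definition fgenerated :: "('g, 'b) monoid_scheme \<Rightarrow> 'g set \<Rightarrow> 'g set \<Rightarrow> 'g set" where
  "fgenerated G D X = \<Inter>{S. fsubspace G D S \<and> X \<subseteq> S}"

definition complete_quadrilateral :: "('g, 'b) monoid_scheme \<Rightarrow> 'g set \<Rightarrow> 'g set \<Rightarrow> bool" where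
  "complete_quadrilateral G D S \<longleftrightarrow> fsubspace G D S \<and> finite S \<and> card S = 6 \<and>
     (let L = {l \<in> fischer_lines G D. l \<subseteq> S} in
        card L = 4 \<and>
        (\<forall>l1\<in>L. \<forall>l2\<in>L. l1 \<noteq> l2 \<longrightarrow> card (l1 \<inter> l2) = 1) \<and>
        (\<forall>p\<in>S. card {l \<in> L. p \<in> l} = 2))"

definition symplectic_type :: "('g, 'b) monoid_scheme \<Rightarrow> 'g set \<Rightarrow> bool" where
  "symplectic_type G D \<longleftrightarrow>
     (\<forall>l1\<in>fischer_lines G D. \<forall>l2\<in>fischer_lines G D. l1 \<noteq> l2 \<and> l1 \<inter> l2 \<noteq> {} \<longrightarrow>
        complete_quadrilateral G D (fgenerated G D (l1 \<union> l2)))"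

section \<open>The nilpotent Matsuo algebra M_R(G,1), elements as finitely supported functions D \<Rightarrow> R\<close>

definition supp :: "('g \<Rightarrow> 'r::zero) \<Rightarrow> 'g set" where
  "supp v = {p. v p \<noteq> 0}"

definition matsuo_carrier :: "'g set \<Rightarrow> ('g \<Rightarrow> 'r::zero) set" where
  "matsuo_carrier D = {v. finite (supp v) \<and> supp v \<subseteq> D}"

definition pt :: "'g \<Rightarrow> 'g \<Rightarrow> 'r::{zero,one}" where
  "pt p = (\<lambda>x. if x = p then 1 else 0)"

definition setvec :: "'g set \<Rightarrow> 'g \<Rightarrow> 'r::comm_ring_1" where
  "setvec S = (\<lambda>x. \<Sum>p\<in>S. pt p x)"

definition basis_prod :: "('g, 'b) monoid_scheme \<Rightarrow> 'g set \<Rightarrow> 'g \<Rightarrow> 'g \<Rightarrow> 'g \<Rightarrow> 'r::comm_ring_1" where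
  "basis_prod G D p q = (if fcollinear G D p q
      then (\<lambda>x. pt p x + pt q x + pt (fwedge G D p q) x) else (\<lambda>x. 0))"

definition mprod :: "('g, 'b) monoid_scheme \<Rightarrow> 'g set \<Rightarrow> ('g \<Rightarrow> 'r::comm_ring_1) \<Rightarrow> ('g \<Rightarrow> 'r) \<Rightarrow> 'g \<Rightarrow> 'r" where
  "mprod G D u v = (\<lambda>x. \<Sum>p\<in>supp u. \<Sum>q\<in>supp v. u p * v q * basis_prod G D p q x)"

definition rspan :: "('g \<Rightarrow> 'r::comm_ring_1) set \<Rightarrow> ('g \<Rightarrow> 'r) set" where
  "rspan S = {(\<lambda>x. \<Sum>s\<in>F. c s * s x) | F c. finite F \<and> F \<subseteq> S}"

definition vsum :: "('g \<Rightarrow> 'r::comm_ring_1) list \<Rightarrow> 'g \<Rightarrow> 'r" where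
  "vsum us = (\<lambda>x. sum_list (map (\<lambda>u. u x) us))"

definition is_direct_sum :: "('g \<Rightarrow> 'r::comm_ring_1) set list \<Rightarrow> ('g \<Rightarrow> 'r) set \<Rightarrow> bool" where
  "is_direct_sum Us W \<longleftrightarrow>
     W = {vsum us | us. length us = length Us \<and> (\<forall>i<length Us. us ! i \<in> Us ! i)} \<and>
     (\<forall>us. length us = length Us \<and> (\<forall>i<length Us. us ! i \<in> Us ! i) \<and> vsum us = (\<lambda>x. 0)
        \<longrightarrow> (\<forall>i<length Us. us ! i = (\<lambda>x. 0)))"

end

theory Submission
  imports Defs
begin

lemma lineD: "l \<in> fischer_lines G D \<Longrightarrow> l \<subseteq> D \<and> card l = 3"
  by (simp add: fischer_lines_def)

lemma fgen_sup: "X \<subseteq> fgenerated G D X"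
  unfolding fgenerated_def by blast

lemma card3_elems:
  assumes "card l = 3" "p \<in> l" "q \<in> l" "p \<noteq> q"
  shows "\<exists>r. l = {p,q,r} \<and> r \<noteq> p \<and> r \<noteq> q"
proof -
  have fin: "finite l" using assms(1) card.infinite by fastforce
  have "card (l - {p,q}) = 1" using assms fin by (simp add: card_Diff_subset)
  then obtain r where r: "l - {p,q} = {r}" by (meson card_1_singletonE)
  then show ?thesis using assms by blast
qed

locale sfs =
  fixes G :: "('g, 'b) monoid_scheme" and D :: "'g set"
  assumes symp: "symplectic_type G D"
begin

abbreviation "Ln \<equiv> fischer_lines G D"
abbreviation "col \<equiv> fcollinear G D"
abbreviation "wdg \<equiv> fwedge G D"

definition tri where "tri p q r \<longleftrightarrow> {p,q,r} \<in> Ln \<and> p \<noteq> q \<and> q \<noteq> r \<and> p \<noteq> r"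

lemma line_unique:
  assumes "l1 \<in> Ln" "l2 \<in> Ln" "p \<in> l1" "q \<in> l1" "p \<in> l2" "q \<in> l2" "p \<noteq> q"
  shows "l1 = l2"
proof (rule ccontr)
  assume ne: "l1 \<noteq> l2"
  let ?S = "fgenerated G D (l1 \<union> l2)"
  have cq: "complete_quadrilateral G D ?S"
    using symp ne assms unfolding symplectic_type_def by blast
  have "l1 \<subseteq> ?S" "l2 \<subseteq> ?S" using fgen_sup[of "l1 \<union> l2" G D] by auto
  hence "card (l1 \<inter> l2) = 1" using cq ne assms(1,2)
    unfolding complete_quadrilateral_def Let_def by blast
  moreover have "finite (l1 \<inter> l2)" using lineD[OF assms(1)]
    by (metis card.infinite finite_Int zero_neq_numeral)
  moreover have "{p,q} \<subseteq> l1 \<inter> l2" using assms by auto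
  ultimately have "card {p,q} \<le> 1" by (metis card_mono)
  thus False using assms(7) by simp
qed

lemma tri_perm:
  "tri p q r \<Longrightarrow> tri q p r" "tri p q r \<Longrightarrow> tri p r q" "tri p q r \<Longrightarrow> tri r q p"
  "tri p q r \<Longrightarrow> tri q r p" "tri p q r \<Longrightarrow> tri r p q"
  unfolding tri_def by (auto simp: insert_commute)

lemma tri_wdg:
  assumes "tri p q r" shows "col p q \<and> wdg p q = r"
proof
  show "col p q" using assms unfolding tri_def fcollinear_def by blast
  show "wdg p q = r"
    unfolding fwedge_def
  proof (rule the_equality)
    show "\<exists>l\<in>Ln. l = {p, q, r} \<and> r \<noteq> p \<and> r \<noteq> q" using assms unfolding tri_def by blast
  next
    fix r' assume "\<exists>l\<in>Ln. l = {p, q, r'} \<and> r' \<noteq> p \<and> r' \<noteq> q"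
    then obtain l where l: "l \<in> Ln" "l = {p,q,r'}" "r' \<noteq> p" "r' \<noteq> q" by blast
    have "l = {p,q,r}" using line_unique[OF l(1), of "{p,q,r}" p q] l assms unfolding tri_def by auto
    thus "r' = r" using l by auto
  qed
qed

lemma col_tri:
  assumes "col p q" shows "tri p q (wdg p q)"
proof -
  obtain l where l: "l \<in> Ln" "p \<in> l" "q \<in> l" "p \<noteq> q" using assms unfolding fcollinear_def by blast
  obtain r where r: "l = {p,q,r}" "r \<noteq> p" "r \<noteq> q" using card3_elems lineD l by metis
  have "tri p q r" unfolding tri_def using l r by auto
  thus ?thesis using tri_wdg by auto
qed

lemma col_sym: "col p q \<Longrightarrow> col q p"
  using col_tri tri_perm(1) tri_wdg by blast

lemma col_D: "col p q \<Longrightarrow> p \<in> D \<and> q \<in> D"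
  unfolding fcollinear_def using lineD by blast

lemma tri_D: "tri p q r \<Longrightarrow> p \<in> D \<and> q \<in> D \<and> r \<in> D"
  unfolding tri_def using lineD by blast

lemma in_line_col: "l \<in> Ln \<Longrightarrow> p \<in> l \<Longrightarrow> q \<in> l \<Longrightarrow> p \<noteq> q \<Longrightarrow> col p q"
  unfolding fcollinear_def by blast

lemma tri_same:
  assumes "tri p q r" "tri p' q' r'" "s \<in> {p,q,r}" "t \<in> {p,q,r}" "s \<in> {p',q',r'}" "t \<in> {p',q',r'}" "s \<noteq> t"
  shows "{p,q,r} = {p',q',r'}"
  using line_unique[of "{p,q,r}" "{p',q',r'}" s t] assms unfolding tri_def by blast

lemma subsp_closed: "fsubspace G D S \<Longrightarrow> p \<in> S \<Longrightarrow> q \<in> S \<Longrightarrow> col p q \<Longrightarrow> wdg p q \<in> S"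
  unfolding fsubspace_def by blast

end

context sfs begin

lemma cq_props:
  assumes "complete_quadrilateral G D S"
  shows "fsubspace G D S" "finite S" "card S = 6"
    "card {l \<in> Ln. l \<subseteq> S} = 4"
    "\<And>l1 l2. l1 \<in> Ln \<Longrightarrow> l1 \<subseteq> S \<Longrightarrow> l2 \<in> Ln \<Longrightarrow> l2 \<subseteq> S \<Longrightarrow> l1 \<noteq> l2 \<Longrightarrow> card (l1 \<inter> l2) = 1"
    "\<And>p. p \<in> S \<Longrightarrow> card {l \<in> {l \<in> Ln. l \<subseteq> S}. p \<in> l} = 2"
  using assms unfolding complete_quadrilateral_def Let_def by auto

lemma cq_gen:
  assumes "l1 \<in> Ln" "l2 \<in> Ln" "l1 \<noteq> l2" "p \<in> l1" "p \<in> l2"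
  shows "complete_quadrilateral G D (fgenerated G D (l1 \<union> l2))"
  using symp assms unfolding symplectic_type_def by blast

lemma tri_dist: "tri p q r \<Longrightarrow> p \<noteq> q \<and> q \<noteq> r \<and> p \<noteq> r"
  unfolding tri_def by blast
lemma tri_ln: "tri p q r \<Longrightarrow> {p,q,r} \<in> Ln"
  unfolding tri_def by blast

lemma card3: "a \<noteq> b \<Longrightarrow> b \<noteq> c \<Longrightarrow> a \<noteq> c \<Longrightarrow> card {a,b,c} = 3"
  by auto

lemma exactly_one:
  assumes L: "tri p1 p2 p3" and z: "z \<notin> {p1,p2,p3}" "col z p1"
  shows "col z p2 \<longleftrightarrow> \<not> col z p3"
proof -
  define x where "x = wdg p1 z"
  have tm: "tri p1 z x" unfolding x_def using col_tri col_sym z by blast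
  define S where "S = fgenerated G D ({p1,p2,p3} \<union> {p1,z,x})"
  have mne: "{p1,p2,p3} \<noteq> {p1,z,x}"
  proof
    assume "{p1,p2,p3} = {p1,z,x}"
    hence "z \<in> {p1,p2,p3}" by (simp only: insert_iff simp_thms)
    thus False using z(1) by (rule notE[rotated])
  qed
  have cq: "complete_quadrilateral G D S" unfolding S_def
    by (rule cq_gen[of _ _ p1], rule tri_ln[OF L], rule tri_ln[OF tm], rule mne, simp, simp)
  note C = cq_props[OF cq]
  have sup0: "{p1,p2,p3} \<union> {p1,z,x} \<subseteq> S" unfolding S_def by (rule fgen_sup)
  hence sup: "{p1,p2,p3} \<subseteq> S" "{p1,z,x} \<subseteq> S" by (simp_all only: Un_subset_iff)
  let ?Z = "{l \<in> {l \<in> Ln. l \<subseteq> S}. z \<in> l}"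
  have "z \<in> S" using sup by blast
  hence cz: "card ?Z = 2" by (rule C(6))
  have finZ: "finite ?Z" by (rule card_ge_0_finite, unfold cz, simp)
  show ?thesis
  proof
    assume c2: "col z p2"
    show "\<not> col z p3"
    proof
      assume c3: "col z p3"
      have t2: "tri z p2 (wdg z p2)" and t3: "tri z p3 (wdg z p3)" using c2 c3 col_tri by auto
      have "wdg z p2 \<in> S" "wdg z p3 \<in> S" using subsp_closed[OF C(1)] sup c2 c3 by auto
      hence in2: "{z,p2,wdg z p2} \<in> ?Z" "{z,p3,wdg z p3} \<in> ?Z" "{p1,z,x} \<in> ?Z"
        using tri_ln[OF t2] tri_ln[OF t3] tri_ln[OF tm] sup by auto
      have d1: "{z,p2,wdg z p2} \<noteq> {p1,z,x}"
      proof
        assume "{z,p2,wdg z p2} = {p1,z,x}"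
        hence "p2 \<in> {p1,z,x}" by blast
        hence "{p1,z,x} = {p1,p2,p3}" using tri_dist[OF L] by (intro tri_same[OF tm L, of p1 p2]) simp_all
        thus False using z by blast
      qed
      have d2: "{z,p3,wdg z p3} \<noteq> {p1,z,x}"
      proof
        assume "{z,p3,wdg z p3} = {p1,z,x}"
        hence "p3 \<in> {p1,z,x}" by blast
        hence "{p1,z,x} = {p1,p2,p3}" using tri_dist[OF L] by (intro tri_same[OF tm L, of p1 p3]) simp_all
        thus False using z by blast
      qed
      have d3: "{z,p2,wdg z p2} \<noteq> {z,p3,wdg z p3}"
      proof
        assume "{z,p2,wdg z p2} = {z,p3,wdg z p3}"
        hence "p3 \<in> {z,p2,wdg z p2}" by blast
        hence "{z,p2,wdg z p2} = {p1,p2,p3}" using tri_dist[OF L] by (intro tri_same[OF t2 L, of p2 p3]) simp_all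
        thus False using z by blast
      qed
      have "card {{z,p2,wdg z p2}, {z,p3,wdg z p3}, {p1,z,x}} = 3" using d1 d2 d3 by (intro card3)
      moreover have "card {{z,p2,wdg z p2}, {z,p3,wdg z p3}, {p1,z,x}} \<le> card ?Z"
        by (rule card_mono[OF finZ]) (use in2 in blast)
      ultimately show False using cz by simp
    qed
  next
    assume n3: "\<not> col z p3"
    show "col z p2"
    proof (rule ccontr)
      assume n2: "\<not> col z p2"
      have "\<not> ?Z \<subseteq> {{p1,z,x}}"
      proof
        assume "?Z \<subseteq> {{p1,z,x}}"
        hence "card ?Z \<le> card {{p1,z,x}}" by (intro card_mono) auto
        hence "card ?Z \<le> 1" by simp
        thus False using cz by simp
      qed
      then obtain n where n: "n \<in> Ln" "n \<subseteq> S" "z \<in> n" "n \<noteq> {p1,z,x}" by blast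
      have "n \<noteq> {p1,p2,p3}" using n(3) z by blast
      hence "card (n \<inter> {p1,p2,p3}) = 1" using C(5)[OF n(1,2), of "{p1,p2,p3}"] tri_ln[OF L] sup by blast
      then obtain p where "n \<inter> {p1,p2,p3} = {p}" by (rule card_1_singletonE)
      hence p: "p \<in> n" "p \<in> {p1,p2,p3}" by auto
      have pz: "p \<noteq> z" using p z by auto
      have "col z p" using in_line_col[OF n(1) n(3) p(1)] pz by auto
      moreover have "p \<noteq> p1"
      proof
        assume "p = p1"
        hence "n = {p1,z,x}" using line_unique[OF n(1) tri_ln[OF tm], of p1 z] n p pz by blast
        thus False using n by auto
      qed
      ultimately show False using p n2 n3 by auto
    qed
  qed
qed

end

context sfs begin

lemma tri_mem:
  assumes "tri p q r" "tri p' q' r'" "s \<in> {p,q,r}" "t \<in> {p,q,r}" "s \<in> {p',q',r'}" "t \<in> {p',q',r'}" "s \<noteq> t"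
    "w \<in> {p,q,r}"
  shows "w \<in> {p',q',r'}"
  using tri_same[OF assms(1-7)] assms(8) by simp

lemma card6: "distinct [a,b,c,d,e,f] \<Longrightarrow> card {a,b,c,d,e,f} = 6"
  by (simp add: card_insert_if)

lemma tri_half:
  assumes L: "tri p1 p2 p3" and z: "z \<notin> {p1,p2,p3}" "col z p1" "col z p2"
  defines "x \<equiv> wdg p1 z" and "y \<equiv> wdg p2 z"
  shows "tri p1 z x \<and> tri p2 z y \<and> x \<notin> {p1,p2,p3} \<and> y \<notin> {p1,p2,p3} \<and> x \<noteq> y \<and> x \<noteq> z \<and> y \<noteq> z
     \<and> \<not> col x p2 \<and> tri p3 x y \<and> complete_quadrilateral G D {p1,p2,p3,z,x,y}"
proof -
  have tm: "tri p1 z x" unfolding x_def using col_tri col_sym z by blast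
  have ty: "tri p2 z y" unfolding y_def using col_tri col_sym z by blast
  have dL: "p1 \<noteq> p2" "p2 \<noteq> p3" "p1 \<noteq> p3" using tri_dist[OF L] by auto
  have dm: "p1 \<noteq> z" "z \<noteq> x" "p1 \<noteq> x" using tri_dist[OF tm] by auto
  have dy: "p2 \<noteq> z" "z \<noteq> y" "p2 \<noteq> y" using tri_dist[OF ty] by auto
  have zl: "z \<noteq> p1" "z \<noteq> p2" "z \<noteq> p3" using z(1) by auto
  have mq: "q = p1" if "q \<in> {p1,p2,p3}" "q \<in> {p1,z,x}" for q
  proof (rule ccontr)
    assume "q \<noteq> p1"
    hence "z \<in> {p1,p2,p3}" using tri_mem[OF tm L, of p1 q z] that by simp
    thus False using z(1) by simp
  qed
  define S where "S = fgenerated G D ({p1,p2,p3} \<union> {p1,z,x})"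
  have mne: "{p1,p2,p3} \<noteq> {p1,z,x}"
  proof
    assume "{p1,p2,p3} = {p1,z,x}"
    hence "z \<in> {p1,p2,p3}" by (simp only: insert_iff simp_thms)
    thus False using z(1) by (rule notE[rotated])
  qed
  have cq: "complete_quadrilateral G D S" unfolding S_def
    by (rule cq_gen[of _ _ p1], rule tri_ln[OF L], rule tri_ln[OF tm], rule mne, simp, simp)
  note C = cq_props[OF cq]
  have sup0: "{p1,p2,p3} \<union> {p1,z,x} \<subseteq> S" unfolding S_def by (rule fgen_sup)
  hence sup: "{p1,p2,p3} \<subseteq> S" "{p1,z,x} \<subseteq> S" by (simp_all only: Un_subset_iff)
  have yS: "y \<in> S" unfolding y_def
  proof (rule subsp_closed[OF C(1)])
    show "p2 \<in> S" "z \<in> S" using sup by auto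
    show "col p2 z" using col_sym[OF z(3)] .
  qed
  have xl: "x \<notin> {p1,p2,p3}"
  proof
    assume "x \<in> {p1,p2,p3}"
    hence "x = p1" by (intro mq) simp_all
    thus False using dm by simp
  qed
  have yl: "y \<notin> {p1,p2,p3}"
  proof
    assume yin: "y \<in> {p1,p2,p3}"
    hence "z \<in> {p1,p2,p3}" using tri_mem[OF ty L, of p2 y z] dy by simp
    thus False using z(1) by simp
  qed
  have xy: "x \<noteq> y"
  proof
    assume exy: "x = y"
    have "p2 \<in> {p1,z,x}"
    proof (rule tri_mem[OF ty tm, of z y p2])
      show "y \<in> {p1, z, x}" using exy by simp
      show "z \<noteq> y" using dy by simp
    qed simp_all
    hence "p2 = p1" by (intro mq) simp_all
    thus False using dL by simp
  qed
  have xl': "x \<noteq> p1" "x \<noteq> p2" "x \<noteq> p3" using xl by auto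
  have yl': "y \<noteq> p1" "y \<noteq> p2" "y \<noteq> p3" using yl by auto
  have S6: "{p1,p2,p3,z,x,y} = S"
  proof (rule card_subset_eq[OF C(2)])
    show "{p1,p2,p3,z,x,y} \<subseteq> S" using sup yS by auto
    have "distinct [p1,p2,p3,z,x,y]" using dL dm dy zl xl' yl' xy by auto
    thus "card {p1,p2,p3,z,x,y} = card S" using C(3) card6 by simp
  qed
  have colx: "col x p1" using tri_wdg[OF tri_perm(5)[OF tm]] by simp
  have eo: "col x p2 \<longleftrightarrow> \<not> col x p3" by (rule exactly_one[OF L xl colx])
  have nx2: "\<not> col x p2"
  proof
    assume c: "col x p2"
    define u where "u = wdg x p2"
    have tu: "tri x p2 u" unfolding u_def by (rule col_tri[OF c])
    have "u \<in> S" unfolding u_def by (rule subsp_closed[OF C(1)]) (use sup S6 c in \<open>simp_all\<close>)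
    hence "u \<in> {p1,p2,p3,z,x,y}" using S6 by simp
    moreover have du: "x \<noteq> p2" "p2 \<noteq> u" "x \<noteq> u" using tri_dist[OF tu] by auto
    ultimately have "u = p1 \<or> u = p3 \<or> u = z \<or> u = y" by auto
    thus False
    proof (elim disjE)
      assume "u = p1"
      hence "x \<in> {p1,p2,p3}" using tri_mem[OF tu L, of p2 u x] dL by simp
      thus False using xl by simp
    next
      assume "u = p3"
      hence "x \<in> {p1,p2,p3}" using tri_mem[OF tu L, of p2 u x] dL by simp
      thus False using xl by simp
    next
      assume "u = z"
      hence "p2 \<in> {p1,z,x}" using tri_mem[OF tu tm, of x u p2] dm by simp
      hence "p2 = p1" by (intro mq) simp_all
      thus False using dL by simp
    next
      assume "u = y"
      hence "x \<in> {p2,z,y}" using tri_mem[OF tu ty, of p2 u x] dy by simp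
      thus False using xl' dm xy by simp
    qed
  qed
  hence c3: "col x p3" using eo by simp
  define v where "v = wdg x p3"
  have tv: "tri x p3 v" unfolding v_def by (rule col_tri[OF c3])
  have "v \<in> S" unfolding v_def by (rule subsp_closed[OF C(1)]) (use sup S6 c3 in \<open>simp_all\<close>)
  hence "v \<in> {p1,p2,p3,z,x,y}" using S6 by simp
  moreover have dv: "x \<noteq> p3" "p3 \<noteq> v" "x \<noteq> v" using tri_dist[OF tv] by auto
  ultimately have "v = p1 \<or> v = p2 \<or> v = z \<or> v = y" by auto
  hence vy: "v = y"
  proof (elim disjE)
    assume "v = p1"
    hence "x \<in> {p1,p2,p3}" using tri_mem[OF tv L, of p3 v x] dL by simp
    thus ?thesis using xl by simp
  next
    assume "v = p2"
    hence "x \<in> {p1,p2,p3}" using tri_mem[OF tv L, of p3 v x] dL by simp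
    thus ?thesis using xl by simp
  next
    assume "v = z"
    hence "p3 \<in> {p1,z,x}" using tri_mem[OF tv tm, of x v p3] dm by simp
    hence "p3 = p1" by (intro mq) simp_all
    thus ?thesis using dL by simp
  qed
  have "tri p3 x y" using tri_perm(1)[OF tv] vy by simp
  thus ?thesis using tm ty xl yl xy dm dy nx2 cq S6 by auto
qed

end

context sfs begin

definition goodz where
  "goodz p1 p2 p3 z \<longleftrightarrow> tri p1 p2 p3 \<and> z \<notin> {p1,p2,p3} \<and> col z p1 \<and> col z p2"

lemma goodz_full:
  assumes g: "goodz p1 p2 p3 z"
  defines "x \<equiv> wdg p1 z" and "y \<equiv> wdg p2 z"
  shows "tri p1 z x" "tri p2 z y" "tri p3 x y" "x \<notin> {p1,p2,p3}" "y \<notin> {p1,p2,p3}"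
    "x \<noteq> y" "x \<noteq> z" "y \<noteq> z" "\<not> col z p3" "\<not> col x p2" "\<not> col y p1"
    "complete_quadrilateral G D {p1,p2,p3,z,x,y}"
    "goodz p1 p3 p2 x" "goodz p2 p3 p1 y" "wdg p1 x = z" "wdg p3 x = y" "wdg p2 y = z" "wdg p3 y = x"
    "z \<in> D" "x \<in> D" "y \<in> D"
proof -
  have L: "tri p1 p2 p3" and z: "z \<notin> {p1,p2,p3}" "col z p1" "col z p2" using g unfolding goodz_def by auto
  note H = tri_half[OF L z, folded x_def y_def]
  have L2: "tri p2 p1 p3" using tri_perm(1)[OF L] .
  have z2: "z \<notin> {p2,p1,p3}" using z(1) by blast
  note H2 = tri_half[OF L2 z2 z(3) z(2), folded x_def y_def]
  show "tri p1 z x" "tri p2 z y" "tri p3 x y" "x \<notin> {p1,p2,p3}" "y \<notin> {p1,p2,p3}"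
    "x \<noteq> y" "x \<noteq> z" "y \<noteq> z" "\<not> col x p2" "complete_quadrilateral G D {p1,p2,p3,z,x,y}"
    using H by auto
  show "\<not> col y p1" using H2 by auto
  show "\<not> col z p3" using exactly_one[OF L z(1) z(2)] z(3) by simp
  have t1: "tri p1 x z" using tri_perm(2)[OF \<open>tri p1 z x\<close>] .
  have t2: "tri p3 x y" using \<open>tri p3 x y\<close> .
  have t3: "tri p2 y z" using tri_perm(2)[OF \<open>tri p2 z y\<close>] .
  have t4: "tri p3 y x" using tri_perm(2)[OF \<open>tri p3 x y\<close>] .
  show w: "wdg p1 x = z" "wdg p3 x = y" "wdg p2 y = z" "wdg p3 y = x"
    using tri_wdg[OF t1] tri_wdg[OF t2] tri_wdg[OF t3] tri_wdg[OF t4] by auto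
  have "col x p1" "col x p3" "col y p2" "col y p3"
    using tri_wdg[OF tri_perm(1)[OF t1]] tri_wdg[OF tri_perm(1)[OF t2]]
      tri_wdg[OF tri_perm(1)[OF t3]] tri_wdg[OF tri_perm(1)[OF t4]] by auto
  moreover have "tri p1 p3 p2" "tri p2 p3 p1" using L tri_perm by blast+
  moreover have "x \<notin> {p1,p3,p2}" "y \<notin> {p2,p3,p1}" using H by auto
  ultimately show "goodz p1 p3 p2 x" "goodz p2 p3 p1 y" unfolding goodz_def by auto
  show "z \<in> D" "x \<in> D" "y \<in> D" using tri_D[OF t1] tri_D[OF t2] by auto
qed

end

locale sfsl = sfs +
  fixes a b c
  assumes lineL: "{a,b,c} \<in> fischer_lines G D"
begin

abbreviation "ell \<equiv> {a,b,c}"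

lemma triL: "tri a b c"
proof -
  have "card {a,b,c} = 3" using lineD[OF lineL] by simp
  hence "a \<noteq> b \<and> b \<noteq> c \<and> a \<noteq> c" by (auto simp: card_insert_if split: if_splits)
  thus ?thesis unfolding tri_def using lineL by blast
qed

lemma ell_D: "ell \<subseteq> D" using lineD[OF lineL] by simp

definition P2' where "P2' = {z \<in> D. z \<notin> ell \<and> (\<exists>p\<in>ell. col z p)}"
definition Qs where "Qs = {\<pi>. complete_quadrilateral G D \<pi> \<and> ell \<subseteq> \<pi>}"

lemma enum:
  assumes "z \<in> P2'"
  shows "\<exists>p1 p2 p3. {p1,p2,p3} = ell \<and> goodz p1 p2 p3 z"
proof -
  have zD: "z \<in> D" and zl: "z \<notin> ell" and ex: "\<exists>p\<in>ell. col z p" using assms unfolding P2'_def by auto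
  have T: "tri a b c" "tri b a c" "tri c a b" using triL tri_perm by blast+
  from ex consider "col z a" | "col z b" | "col z c" by blast
  thus ?thesis
  proof cases
    case 1
    have "col z b \<longleftrightarrow> \<not> col z c" using exactly_one[OF T(1) _ 1] zl by blast
    thus ?thesis
    proof (cases "col z b")
      case True thus ?thesis using 1 T(1) zl unfolding goodz_def by blast
    next
      case False
      hence "goodz a c b z" using 1 \<open>col z b \<longleftrightarrow> \<not> col z c\<close> tri_perm(2)[OF T(1)] zl unfolding goodz_def by auto
      moreover have "{a,c,b} = ell" by auto
      ultimately show ?thesis by blast
    qed
  next
    case 2
    have "col z a \<longleftrightarrow> \<not> col z c" using exactly_one[OF T(2) _ 2] zl by blast
    thus ?thesis
    proof (cases "col z a")
      case True
      hence "goodz b a c z" using 2 T(2) zl unfolding goodz_def by auto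
      moreover have "{b,a,c} = ell" by auto
      ultimately show ?thesis by blast
    next
      case False
      hence "goodz b c a z" using 2 \<open>col z a \<longleftrightarrow> \<not> col z c\<close> tri_perm(2)[OF T(2)] zl unfolding goodz_def by auto
      moreover have "{b,c,a} = ell" by auto
      ultimately show ?thesis by blast
    qed
  next
    case 3
    have "col z a \<longleftrightarrow> \<not> col z b" using exactly_one[OF T(3) _ 3] zl by blast
    thus ?thesis
    proof (cases "col z a")
      case True
      hence "goodz c a b z" using 3 T(3) zl unfolding goodz_def by auto
      moreover have "{c,a,b} = ell" by auto
      ultimately show ?thesis by blast
    next
      case False
      hence "goodz c b a z" using 3 \<open>col z a \<longleftrightarrow> \<not> col z b\<close> tri_perm(2)[OF T(3)] zl unfolding goodz_def by auto
      moreover have "{c,b,a} = ell" by auto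
      ultimately show ?thesis by blast
    qed
  qed
qed

lemma goodz_P2': "goodz p1 p2 p3 z \<Longrightarrow> {p1,p2,p3} = ell \<Longrightarrow> z \<in> P2'"
  unfolding P2'_def goodz_def using col_D by blast

lemma Qs_props:
  assumes "\<pi> \<in> Qs"
  shows "finite \<pi>" "\<pi> \<subseteq> D" "ell \<subseteq> \<pi>" "fsubspace G D \<pi>" "card \<pi> = 6"
  using assms cq_props[of \<pi>] unfolding Qs_def fsubspace_def by auto

lemma Qform:
  assumes "\<pi> \<in> Qs" "z \<in> \<pi>" "z \<notin> ell"
  shows "z \<in> P2' \<and> (\<forall>p1 p2 p3. {p1,p2,p3} = ell \<and> goodz p1 p2 p3 z \<longrightarrow> \<pi> = {p1,p2,p3,z,wdg p1 z, wdg p2 z})"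
proof -
  have cq: "complete_quadrilateral G D \<pi>" and lp: "ell \<subseteq> \<pi>" using assms(1) unfolding Qs_def by auto
  note C = cq_props[OF cq]
  have zD: "z \<in> D" using C(1) assms(2) unfolding fsubspace_def by blast
  let ?Z = "{l \<in> {l \<in> Ln. l \<subseteq> \<pi>}. z \<in> l}"
  have cz: "card ?Z = 2" by (rule C(6)[OF assms(2)])
  have "?Z \<noteq> {}"
  proof
    assume e: "?Z = {}"
    have "card ?Z = 0" unfolding e by (rule card.empty)
    thus False using cz by simp
  qed
  then obtain n where n: "n \<in> Ln" "n \<subseteq> \<pi>" "z \<in> n" by blast
  have "n \<noteq> ell" using n(3) assms(3) by blast
  hence "card (n \<inter> ell) = 1" using C(5)[OF n(1,2) lineL lp] by blast
  then obtain p where "n \<inter> ell = {p}" by (rule card_1_singletonE)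
  hence p: "p \<in> n" "p \<in> ell" by auto
  have pz: "p \<noteq> z" using p(2) assms(3) by blast
  have "col z p" using in_line_col[OF n(1) n(3) p(1) pz[symmetric]] .
  hence zP: "z \<in> P2'" unfolding P2'_def using zD assms(3) p(2) by blast
  show ?thesis
  proof (intro conjI zP allI impI)
    fix p1 p2 p3 assume h: "{p1,p2,p3} = ell \<and> goodz p1 p2 p3 z"
    hence g: "goodz p1 p2 p3 z" and e: "{p1,p2,p3} = ell" by auto
    note F = goodz_full[OF g]
    have z12: "col z p1" "col z p2" using g unfolding goodz_def by auto
    have p12: "p1 \<in> \<pi>" "p2 \<in> \<pi>" "p3 \<in> \<pi>" using e lp by auto
    have "wdg p1 z \<in> \<pi>" "wdg p2 z \<in> \<pi>"
      using subsp_closed[OF C(1) p12(1) assms(2) col_sym[OF z12(1)]]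
        subsp_closed[OF C(1) p12(2) assms(2) col_sym[OF z12(2)]] by auto
    hence sub: "{p1,p2,p3,z,wdg p1 z, wdg p2 z} \<subseteq> \<pi>" using p12 assms(2) by auto
    have cq6: "complete_quadrilateral G D {p1,p2,p3,z,wdg p1 z, wdg p2 z}" using F(12) .
    have "card {p1,p2,p3,z,wdg p1 z, wdg p2 z} = 6" using cq_props(3)[OF cq6] .
    thus "\<pi> = {p1,p2,p3,z,wdg p1 z, wdg p2 z}" using card_subset_eq[OF C(2) sub] C(3) by simp
  qed
qed

lemma Qex:
  assumes "{p1,p2,p3} = ell" "goodz p1 p2 p3 z"
  shows "{p1,p2,p3,z,wdg p1 z, wdg p2 z} \<in> Qs"
  using goodz_full(12)[OF assms(2)] assms(1) unfolding Qs_def by auto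

lemma Qs_sub: "\<pi> \<in> Qs \<Longrightarrow> \<pi> \<subseteq> ell \<union> P2'"
  using Qform by blast

lemma Qs_uniq:
  assumes "\<pi> \<in> Qs" "\<pi>' \<in> Qs" "z \<in> \<pi>" "z \<in> \<pi>'" "z \<notin> ell"
  shows "\<pi> = \<pi>'"
proof -
  have zP: "z \<in> P2'" using Qform[OF assms(1,3,5)] by blast
  obtain p1 p2 p3 where e: "{p1,p2,p3} = ell" and g: "goodz p1 p2 p3 z" using enum[OF zP] by blast
  have f1: "\<pi> = {p1,p2,p3,z,wdg p1 z, wdg p2 z}" using Qform[OF assms(1,3,5)] e g by blast
  have f2: "\<pi>' = {p1,p2,p3,z,wdg p1 z, wdg p2 z}" using Qform[OF assms(2,4,5)] e g by blast
  show ?thesis using f1 f2 by simp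
qed

lemma Qs_ex:
  assumes "z \<in> P2'" shows "\<exists>\<pi>\<in>Qs. z \<in> \<pi>"
proof -
  obtain p1 p2 p3 where e: "{p1,p2,p3} = ell" and g: "goodz p1 p2 p3 z" using enum[OF assms] by blast
  have "{p1,p2,p3,z,wdg p1 z, wdg p2 z} \<in> Qs" by (rule Qex[OF e g])
  moreover have "z \<in> {p1,p2,p3,z,wdg p1 z, wdg p2 z}" by simp
  ultimately show ?thesis by (rule bexI[rotated])
qed

lemma Qs_nonl: "\<pi> \<in> Qs \<Longrightarrow> \<exists>z\<in>\<pi>. z \<notin> ell"
proof (rule ccontr)
  assume "\<pi> \<in> Qs" "\<not> (\<exists>z\<in>\<pi>. z \<notin> ell)"
  hence "\<pi> \<subseteq> ell" by blast
  hence "card \<pi> \<le> card ell" by (intro card_mono) auto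
  also have "card ell = 3" using lineD[OF lineL] by simp
  finally show False using Qs_props(5)[OF \<open>\<pi> \<in> Qs\<close>] by simp
qed

end


definition Kf :: "('g, 'b) monoid_scheme \<Rightarrow> 'g set \<Rightarrow> 'g set \<Rightarrow> 'g \<Rightarrow> 'g \<Rightarrow> 'r::comm_ring_1" where
  "Kf G D l q = (\<lambda>x. \<Sum>p\<in>l. basis_prod G D p q x)"

lemma pt_simp: "pt p x = (if x = p then 1 else 0)" by (simp add: pt_def)

lemma setvec_ind: "finite S \<Longrightarrow> (setvec S x :: 'r::comm_ring_1) = (if x \<in> S then 1 else 0)"
  unfolding setvec_def pt_def by (simp add: sum.delta)

lemma supp_setvec: "finite S \<Longrightarrow> supp (setvec S :: _ \<Rightarrow> 'r::comm_ring_1) = S"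
  unfolding supp_def by (auto simp: setvec_ind)

lemma supp_pt: "supp (pt q :: _ \<Rightarrow> 'r::comm_ring_1) = {q}"
  unfolding supp_def pt_def by auto

lemma sum_pt_right: "finite T \<Longrightarrow> (\<Sum>q\<in>T. f q * (pt p q :: 'r::comm_ring_1)) = (if p \<in> T then f p else 0)"
proof -
  assume T: "finite T"
  have "(\<Sum>q\<in>T. f q * (pt p q :: 'r)) = (\<Sum>q\<in>T. if q = p then f q else 0)" by (rule sum.cong) (auto simp: pt_def)
  also have "\<dots> = (if p \<in> T then f p else 0)" using T by (simp add: sum.delta)
  finally show ?thesis .
qed

lemma sum_pt_left: "finite T \<Longrightarrow> (\<Sum>q\<in>T. f q * (pt q t :: 'r::comm_ring_1)) = (if t \<in> T then f t else 0)"
proof -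
  assume T: "finite T"
  have "(\<Sum>q\<in>T. f q * (pt q t :: 'r)) = (\<Sum>q\<in>T. if q = t then f q else 0)" by (rule sum.cong) (auto simp: pt_def)
  also have "\<dots> = (if t \<in> T then f t else 0)" using T by (simp add: sum.delta)
  finally show ?thesis .
qed

lemma ad_formula:
  fixes v :: "'g \<Rightarrow> 'r::comm_ring_1"
  assumes "finite l" "finite T" "supp v \<subseteq> T"
  shows "mprod G D (setvec l) v x = (\<Sum>q\<in>T. v q * Kf G D l q x)"
proof -
  have "mprod G D (setvec l) v x = (\<Sum>p\<in>l. \<Sum>q\<in>supp v. setvec l p * v q * basis_prod G D p q x)"
    by (simp add: mprod_def supp_setvec[OF assms(1)])
  also have "\<dots> = (\<Sum>p\<in>l. \<Sum>q\<in>supp v. v q * basis_prod G D p q x)"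
    by (rule sum.cong[OF refl], rule sum.cong[OF refl]) (simp add: setvec_ind[OF assms(1)])
  also have "\<dots> = (\<Sum>q\<in>supp v. \<Sum>p\<in>l. v q * basis_prod G D p q x)" by (rule sum.swap)
  also have "\<dots> = (\<Sum>q\<in>supp v. v q * Kf G D l q x)" by (simp add: Kf_def sum_distrib_left)
  also have "\<dots> = (\<Sum>q\<in>T. v q * Kf G D l q x)"
    by (rule sum.mono_neutral_left[OF assms(2,3)]) (auto simp: supp_def)
  finally show ?thesis .
qed

lemma supp_comb:
  fixes f :: "'i \<Rightarrow> 'g \<Rightarrow> 'r::comm_ring_1"
  shows "supp (\<lambda>t. \<Sum>i\<in>I. c i * f i t) \<subseteq> (\<Union>i\<in>I. supp (f i))"
proof
  fix t assume "t \<in> supp (\<lambda>t. \<Sum>i\<in>I. c i * f i t)"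
  hence "(\<Sum>i\<in>I. c i * f i t) \<noteq> 0" by (simp add: supp_def)
  then obtain i where "i \<in> I" "c i * f i t \<noteq> 0" by (meson sum.neutral)
  thus "t \<in> (\<Union>i\<in>I. supp (f i))" unfolding supp_def by (metis (mono_tags, lifting) UN_iff mem_Collect_eq mult_zero_right)
qed

lemma ad_lin:
  fixes f :: "'i \<Rightarrow> 'g \<Rightarrow> 'r::comm_ring_1"
  assumes "finite l" "finite I" "\<And>i. i \<in> I \<Longrightarrow> finite (supp (f i))"
  shows "mprod G D (setvec l) (\<lambda>t. \<Sum>i\<in>I. c i * f i t) = (\<lambda>t. \<Sum>i\<in>I. c i * mprod G D (setvec l) (f i) t)"
proof
  fix x
  let ?T = "\<Union>i\<in>I. supp (f i)"
  have fT: "finite ?T" using assms by auto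
  have "mprod G D (setvec l) (\<lambda>t. \<Sum>i\<in>I. c i * f i t) x = (\<Sum>q\<in>?T. (\<Sum>i\<in>I. c i * f i q) * Kf G D l q x)"
    by (rule ad_formula[OF assms(1) fT supp_comb])
  also have "\<dots> = (\<Sum>i\<in>I. c i * (\<Sum>q\<in>?T. f i q * Kf G D l q x))"
    by (simp add: sum_distrib_right sum_distrib_left mult.assoc sum.swap[of _ ?T])
  also have "\<dots> = (\<Sum>i\<in>I. c i * mprod G D (setvec l) (f i) x)"
    by (rule sum.cong[OF refl]) (subst ad_formula[OF assms(1) fT], auto)
  finally show "mprod G D (setvec l) (\<lambda>t. \<Sum>i\<in>I. c i * f i t) x = (\<Sum>i\<in>I. c i * mprod G D (setvec l) (f i) x)" .
qed

lemma ad_add2: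
  fixes u w :: "'g \<Rightarrow> 'r::comm_ring_1"
  assumes "finite l" "finite (supp u)" "finite (supp w)"
  shows "mprod G D (setvec l) (\<lambda>t. c1 * u t + c2 * w t) = (\<lambda>t. c1 * mprod G D (setvec l) u t + c2 * mprod G D (setvec l) w t)"
proof
  fix x
  let ?T = "supp u \<union> supp w"
  have fT: "finite ?T" using assms by auto
  have s: "supp (\<lambda>t. c1 * u t + c2 * w t) \<subseteq> ?T" by (auto simp: supp_def)
  have "mprod G D (setvec l) (\<lambda>t. c1 * u t + c2 * w t) x = (\<Sum>q\<in>?T. (c1 * u q + c2 * w q) * Kf G D l q x)"
    by (rule ad_formula[OF assms(1) fT s])
  also have "\<dots> = c1 * (\<Sum>q\<in>?T. u q * Kf G D l q x) + c2 * (\<Sum>q\<in>?T. w q * Kf G D l q x)"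
    by (simp add: sum.distrib sum_distrib_left algebra_simps)
  also have "\<dots> = c1 * mprod G D (setvec l) u x + c2 * mprod G D (setvec l) w x"
    by (subst (1 2) ad_formula[OF assms(1) fT]) auto
  finally show "mprod G D (setvec l) (\<lambda>t. c1 * u t + c2 * w t) x = c1 * mprod G D (setvec l) u x + c2 * mprod G D (setvec l) w x" .
qed

lemma ad_pt:
  assumes "finite l"
  shows "mprod G D (setvec l) (pt q :: 'g \<Rightarrow> 'r::comm_ring_1) = Kf G D l q"
proof
  fix x
  show "mprod G D (setvec l) (pt q :: 'g \<Rightarrow> 'r::comm_ring_1) x = Kf G D l q x"
    by (subst ad_formula[OF assms, of "{q}"]) (auto simp: supp_pt, simp add: pt_def)
qed

lemma two0: "(2::'r::comm_ring_1) = 0 \<Longrightarrow> (u::'r) + u = 0"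
  by (metis mult_2 mult_zero_left)


context sfsl begin

abbreviation K where "K \<equiv> Kf G D ell"
abbreviation ad where "ad \<equiv> mprod G D (setvec ell)"

lemma fin_ell: "finite ell" by simp

lemma sum3: "tri p1 p2 p3 \<Longrightarrow> (\<Sum>p\<in>{p1,p2,p3}. f p) = f p1 + f p2 + f p3"
  using tri_dist[of p1 p2 p3] by (simp add: add.assoc)

lemma bp_notcol: "\<not> col p q \<Longrightarrow> (basis_prod G D p q x :: 'r::comm_ring_1) = 0"
  by (simp add: basis_prod_def)

lemma bp_col: "col p q \<Longrightarrow> (basis_prod G D p q x :: 'r::comm_ring_1) = pt p x + pt q x + pt (wdg p q) x"
  by (simp add: basis_prod_def)

lemma K_expand: "tri p1 p2 p3 \<Longrightarrow> {p1,p2,p3} = ell \<Longrightarrow>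
   K q x = basis_prod G D p1 q x + basis_prod G D p2 q x + basis_prod G D p3 q x"
  unfolding Kf_def by (metis sum3)

lemma K_line:
  assumes two: "(2::'r::comm_ring_1) = 0" and L: "tri p1 p2 p3" "{p1,p2,p3} = ell"
  shows "(K p1 :: _ \<Rightarrow> 'r) = (\<lambda>x. 0)"
proof
  fix x
  have n: "\<not> col p1 p1" by (simp add: fcollinear_def)
  have t2: "tri p2 p1 p3" and t3: "tri p3 p1 p2" using L(1) tri_perm by blast+
  have "(K p1 x :: 'r) = basis_prod G D p1 p1 x + basis_prod G D p2 p1 x + basis_prod G D p3 p1 x"
    by (rule K_expand[OF L])
  also have "\<dots> = (pt p2 x + pt p1 x + pt p3 x) + (pt p3 x + pt p1 x + pt p2 x)"
  proof -
    have "(basis_prod G D p2 p1 x :: 'r) = pt p2 x + pt p1 x + pt p3 x"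
      using bp_col[of p2 p1 x] tri_wdg[OF t2] by simp
    moreover have "(basis_prod G D p3 p1 x :: 'r) = pt p3 x + pt p1 x + pt p2 x"
      using bp_col[of p3 p1 x] tri_wdg[OF t3] by simp
    moreover have "(basis_prod G D p1 p1 x :: 'r) = 0" using bp_notcol[OF n] .
    ultimately show ?thesis by simp
  qed
  also have "\<dots> = (pt p1 x + pt p2 x + pt p3 x) + (pt p1 x + pt p2 x + pt p3 x)" by (simp add: ac_simps)
  also have "\<dots> = 0" by (rule two0[OF two])
  finally show "(K p1 x :: 'r) = 0" .
qed

lemma K_none:
  assumes "\<forall>p\<in>ell. \<not> col q p"
  shows "(K q :: _ \<Rightarrow> 'r::comm_ring_1) = (\<lambda>x. 0)"
proof
  fix x
  have "\<And>p. p \<in> ell \<Longrightarrow> (basis_prod G D p q x :: 'r) = 0" using assms col_sym bp_notcol by blast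
  thus "(K q x :: 'r) = 0" unfolding Kf_def by (intro sum.neutral) blast
qed

lemma K_zero:
  assumes two: "(2::'r::comm_ring_1) = 0" and q: "q \<notin> P2'"
  shows "(K q :: _ \<Rightarrow> 'r) = (\<lambda>x. 0)"
proof (cases "q \<in> ell")
  case True
  have T: "tri a b c" "tri b a c" "tri c a b" using triL tri_perm by blast+
  have E: "{a,b,c} = ell" "{b,a,c} = ell" "{c,a,b} = ell" by auto
  from True consider "q = a" | "q = b" | "q = c" by blast
  thus ?thesis
  proof cases
    case 1 thus ?thesis using K_line[OF two T(1) E(1)] by simp
  next
    case 2 thus ?thesis using K_line[OF two T(2) E(2)] by simp
  next
    case 3 thus ?thesis using K_line[OF two T(3) E(3)] by simp
  qed
next
  case False
  have "\<forall>p\<in>ell. \<not> col q p"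
  proof (cases "q \<in> D")
    case True thus ?thesis using q False unfolding P2'_def by blast
  next
    case False thus ?thesis using col_D by blast
  qed
  thus ?thesis by (rule K_none)
qed

lemma K_P2:
  assumes two: "(2::'r::comm_ring_1) = 0" and g: "goodz p1 p2 p3 z" and e: "{p1,p2,p3} = ell"
  shows "(K z :: _ \<Rightarrow> 'r) = (\<lambda>t. pt p1 t + pt p2 t + pt (wdg p1 z) t + pt (wdg p2 z) t)"
proof
  fix t
  have L: "tri p1 p2 p3" and c: "col p1 z" "col p2 z" using g col_sym unfolding goodz_def by auto
  have n: "\<not> col p3 z" using goodz_full(9)[OF g] col_sym by blast
  have "(K z t :: 'r) = basis_prod G D p1 z t + basis_prod G D p2 z t + basis_prod G D p3 z t"
    by (rule K_expand[OF L e])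
  also have "\<dots> = (pt p1 t + pt p2 t + pt (wdg p1 z) t + pt (wdg p2 z) t) + (pt z t + pt z t)"
    using bp_col[OF c(1), where 'r='r] bp_col[OF c(2), where 'r='r] bp_notcol[OF n, where 'r='r] by (simp add: ac_simps)
  also have "\<dots> = pt p1 t + pt p2 t + pt (wdg p1 z) t + pt (wdg p2 z) t" by (simp add: two0[OF two])
  finally show "(K z t :: 'r) = pt p1 t + pt p2 t + pt (wdg p1 z) t + pt (wdg p2 z) t" .
qed

lemma bpz:
  assumes "p \<in> ell" "z \<notin> ell"
  shows "(basis_prod G D p q z :: 'r::comm_ring_1) =
     (if q = z \<and> col p z then 1 else 0) + (if col p z \<and> q = wdg p z then 1 else 0)"
proof (cases "col p q")
  case True
  have zp: "z \<noteq> p" using assms by blast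
  have "(basis_prod G D p q z :: 'r) = pt p z + pt q z + pt (wdg p q) z" by (rule bp_col[OF True])
  also have "\<dots> = (if z = q then 1 else 0) + (if z = wdg p q then 1 else 0)" using zp by (simp add: pt_def)
  also have "\<dots> = (if q = z \<and> col p z then 1 else 0) + (if col p z \<and> q = wdg p z then 1 else 0)"
  proof (cases "q = z")
    case True
    hence "col p z" using \<open>col p q\<close> by simp
    have "wdg p z \<noteq> z" using tri_dist[OF col_tri[OF \<open>col p z\<close>]] by auto
    thus ?thesis using True \<open>col p z\<close> by auto
  next
    case False
    have "(z = wdg p q) \<longleftrightarrow> (col p z \<and> q = wdg p z)"
    proof
      assume "z = wdg p q"
      hence "tri p q z" using col_tri[OF \<open>col p q\<close>] by simp
      thus "col p z \<and> q = wdg p z" using tri_wdg[OF tri_perm(2)] by blast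
    next
      assume h: "col p z \<and> q = wdg p z"
      hence "tri p z q" using col_tri by simp
      thus "z = wdg p q" using tri_wdg[OF tri_perm(2)] by metis
    qed
    thus ?thesis using False by auto
  qed
  finally show ?thesis .
next
  case False
  have "\<not> (col p z \<and> q = wdg p z)"
  proof
    assume h: "col p z \<and> q = wdg p z"
    hence "tri p z q" using col_tri by simp
    thus False using tri_wdg[OF tri_perm(2)] False by blast
  qed
  moreover have "\<not> (q = z \<and> col p z)" using False by auto
  ultimately show ?thesis using bp_notcol[OF False, where 'r='r] by auto
qed

lemma K_val:
  assumes two: "(2::'r::comm_ring_1) = 0" and g: "goodz p1 p2 p3 z" and e: "{p1,p2,p3} = ell"
  shows "(K q z :: 'r) = pt (wdg p1 z) q + pt (wdg p2 z) q"
proof -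
  have L: "tri p1 p2 p3" and c: "col p1 z" "col p2 z" using g col_sym unfolding goodz_def by auto
  have n: "\<not> col p3 z" using goodz_full(9)[OF g] col_sym by blast
  have zl: "z \<notin> ell" using g e unfolding goodz_def by blast
  have pl: "p1 \<in> ell" "p2 \<in> ell" "p3 \<in> ell" using e by auto
  have "(K q z :: 'r) = basis_prod G D p1 q z + basis_prod G D p2 q z + basis_prod G D p3 q z"
    by (rule K_expand[OF L e])
  also have "\<dots> = ((if q = z then 1 else 0) + (if q = wdg p1 z then 1 else 0))
        + ((if q = z then 1 else 0) + (if q = wdg p2 z then 1 else 0))"
    using bpz[OF pl(1) zl, of q, where 'r='r] bpz[OF pl(2) zl, of q, where 'r='r] bpz[OF pl(3) zl, of q, where 'r='r] c n by simp
  also have "\<dots> = (if q = wdg p1 z then 1 else 0) + (if q = wdg p2 z then 1 else 0)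
        + ((if q = z then 1 else 0) + (if q = z then 1 else 0))" by (simp add: ac_simps)
  also have "\<dots> = pt (wdg p1 z) q + pt (wdg p2 z) q" by (simp add: two0[OF two] pt_def)
  finally show ?thesis .
qed

lemma K_supp: "supp (K q :: _ \<Rightarrow> 'r::comm_ring_1) \<subseteq> (\<Union>p\<in>ell. if col p q then {p, q, wdg p q} else {})"
proof
  fix x assume "x \<in> supp (K q :: _ \<Rightarrow> 'r)"
  hence "(\<Sum>p\<in>ell. (basis_prod G D p q x :: 'r)) \<noteq> 0" by (simp add: supp_def Kf_def)
  then obtain p where p: "p \<in> ell" "(basis_prod G D p q x :: 'r) \<noteq> 0" by (meson sum.neutral)
  hence "col p q" using bp_notcol by blast
  hence "x \<in> {p,q,wdg p q}" using p(2) bp_col[of p q x] by (auto simp: pt_def split: if_splits)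
  thus "x \<in> (\<Union>p\<in>ell. if col p q then {p, q, wdg p q} else {})" using p(1) \<open>col p q\<close> by auto
qed

lemma K_A: "(K q :: _ \<Rightarrow> 'r::comm_ring_1) \<in> matsuo_carrier D"
proof -
  have f: "finite (\<Union>p\<in>ell. if col p q then {p, q, wdg p q} else {})" by auto
  have d: "(\<Union>p\<in>ell. if col p q then {p, q, wdg p q} else {}) \<subseteq> D"
    using tri_D[OF col_tri] by (auto split: if_splits)
  show ?thesis unfolding matsuo_carrier_def using K_supp[where 'r='r, of q] f d by (auto intro: finite_subset)
qed

end


lemma vsum2: "vsum [u, w] = (\<lambda>t. u t + w t)" by (simp add: vsum_def)
lemma vsum3: "vsum [u, v, w] = (\<lambda>t. u t + (v t + w t))" by (simp add: vsum_def)

lemma ex_list2: "(\<exists>us. length us = Suc (Suc 0) \<and> P us) \<longleftrightarrow> (\<exists>u w. P [u,w])"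
  by (auto simp: numeral_2_eq_2 length_Suc_conv)
lemma all_list2: "(\<forall>us. length us = Suc (Suc 0) \<longrightarrow> P us) \<longleftrightarrow> (\<forall>u w. P [u,w])"
  by (auto simp: numeral_2_eq_2 length_Suc_conv)
lemma ex_list3: "(\<exists>us. length us = Suc (Suc (Suc 0)) \<and> P us) \<longleftrightarrow> (\<exists>u v w. P [u,v,w])"
proof
  assume "\<exists>us. length us = Suc (Suc (Suc 0)) \<and> P us" thus "\<exists>u v w. P [u,v,w]" by (auto simp: numeral_3_eq_3 length_Suc_conv)
next
  assume "\<exists>u v w. P [u,v,w]"
  then obtain u v w where "P [u,v,w]" by blast
  thus "\<exists>us. length us = Suc (Suc (Suc 0)) \<and> P us" by (intro exI[of _ "[u,v,w]"]) simp
qed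
lemma all_list3: "(\<forall>us. length us = Suc (Suc (Suc 0)) \<longrightarrow> P us) \<longleftrightarrow> (\<forall>u v w. P [u,v,w])"
  by (auto simp: numeral_3_eq_3 length_Suc_conv)

lemma is_direct_sum2:
  "is_direct_sum [X, Y] W \<longleftrightarrow>
     W = {(\<lambda>t. u t + w t) | u w. u \<in> X \<and> w \<in> Y} \<and>
     (\<forall>u\<in>X. \<forall>w\<in>Y. (\<lambda>t. u t + w t) = (\<lambda>t. 0) \<longrightarrow> u = (\<lambda>t. 0) \<and> w = (\<lambda>t. 0))"
proof -
  have lt2: "\<And>P. (\<forall>i<Suc (Suc 0). P i) \<longleftrightarrow> P (0::nat) \<and> P 1" by (auto simp: numeral_2_eq_2 less_Suc_eq)
  have s: "{vsum us |us. length us = length [X, Y] \<and> (\<forall>i<length [X, Y]. us ! i \<in> [X, Y] ! i)}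
      = {(\<lambda>t. u t + w t) | u w. u \<in> X \<and> w \<in> Y}"
  proof -
    have "\<And>f. f \<in> {vsum us |us. length us = length [X, Y] \<and> (\<forall>i<length [X, Y]. us ! i \<in> [X, Y] ! i)}
        \<longleftrightarrow> f \<in> {(\<lambda>t. u t + w t) | u w. u \<in> X \<and> w \<in> Y}"
    proof -
      fix f
      have "f \<in> {vsum us |us. length us = length [X, Y] \<and> (\<forall>i<length [X, Y]. us ! i \<in> [X, Y] ! i)}
        \<longleftrightarrow> (\<exists>us. length us = Suc (Suc 0) \<and> (f = vsum us \<and> (\<forall>i<Suc (Suc 0). us ! i \<in> [X, Y] ! i)))" by auto
      also have "\<dots> \<longleftrightarrow> (\<exists>u w. f = vsum [u,w] \<and> (\<forall>i<Suc (Suc 0). [u,w] ! i \<in> [X, Y] ! i))" by (rule ex_list2)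
      also have "\<dots> \<longleftrightarrow> f \<in> {(\<lambda>t. u t + w t) | u w. u \<in> X \<and> w \<in> Y}" by (simp add: lt2 vsum2)
      finally show "?thesis f" .
    qed
    thus ?thesis by blast
  qed
  have u: "(\<forall>us. length us = length [X, Y] \<and> (\<forall>i<length [X, Y]. us ! i \<in> [X, Y] ! i) \<and> vsum us = (\<lambda>x. 0)
        \<longrightarrow> (\<forall>i<length [X, Y]. us ! i = (\<lambda>x. 0)))
      \<longleftrightarrow> (\<forall>u\<in>X. \<forall>w\<in>Y. (\<lambda>t. u t + w t) = (\<lambda>t. 0) \<longrightarrow> u = (\<lambda>t. 0) \<and> w = (\<lambda>t. 0))"
  proof -
    have "(\<forall>us. length us = length [X, Y] \<and> (\<forall>i<length [X, Y]. us ! i \<in> [X, Y] ! i) \<and> vsum us = (\<lambda>x. 0)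
        \<longrightarrow> (\<forall>i<length [X, Y]. us ! i = (\<lambda>x. 0)))
      \<longleftrightarrow> (\<forall>us. length us = Suc (Suc 0) \<longrightarrow> ((\<forall>i<Suc (Suc 0). us ! i \<in> [X, Y] ! i) \<and> vsum us = (\<lambda>x. 0)
        \<longrightarrow> (\<forall>i<Suc (Suc 0). us ! i = (\<lambda>x. 0))))" by auto
    also have "\<dots> \<longleftrightarrow> (\<forall>u w. ((\<forall>i<Suc (Suc 0). [u,w] ! i \<in> [X, Y] ! i) \<and> vsum [u,w] = (\<lambda>x. 0)
        \<longrightarrow> (\<forall>i<Suc (Suc 0). [u,w] ! i = (\<lambda>x. 0))))" by (rule all_list2)
    also have "\<dots> \<longleftrightarrow> (\<forall>u\<in>X. \<forall>w\<in>Y. (\<lambda>t. u t + w t) = (\<lambda>t. 0) \<longrightarrow> u = (\<lambda>t. 0) \<and> w = (\<lambda>t. 0))"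
      by (simp add: lt2 vsum2) blast
    finally show ?thesis .
  qed
  show ?thesis unfolding is_direct_sum_def s u ..
qed

lemma is_direct_sum3:
  "is_direct_sum [X, Y, Z] W \<longleftrightarrow>
     W = {(\<lambda>t. u t + (v t + w t)) | u v w. u \<in> X \<and> v \<in> Y \<and> w \<in> Z} \<and>
     (\<forall>u\<in>X. \<forall>v\<in>Y. \<forall>w\<in>Z. (\<lambda>t. u t + (v t + w t)) = (\<lambda>t. 0) \<longrightarrow> u = (\<lambda>t. 0) \<and> v = (\<lambda>t. 0) \<and> w = (\<lambda>t. 0))"
proof -
  have lt3: "\<And>P. (\<forall>i<Suc (Suc (Suc 0)). P i) \<longleftrightarrow> P (0::nat) \<and> P 1 \<and> P 2" by (auto simp: numeral_2_eq_2 less_Suc_eq)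
  have s: "{vsum us |us. length us = length [X, Y, Z] \<and> (\<forall>i<length [X, Y, Z]. us ! i \<in> [X, Y, Z] ! i)}
      = {(\<lambda>t. u t + (v t + w t)) | u v w. u \<in> X \<and> v \<in> Y \<and> w \<in> Z}"
  proof -
    have "\<And>f. f \<in> {vsum us |us. length us = length [X, Y, Z] \<and> (\<forall>i<length [X, Y, Z]. us ! i \<in> [X, Y, Z] ! i)}
        \<longleftrightarrow> f \<in> {(\<lambda>t. u t + (v t + w t)) | u v w. u \<in> X \<and> v \<in> Y \<and> w \<in> Z}"
    proof -
      fix f
      have "f \<in> {vsum us |us. length us = length [X, Y, Z] \<and> (\<forall>i<length [X, Y, Z]. us ! i \<in> [X, Y, Z] ! i)}
        \<longleftrightarrow> (\<exists>us. length us = Suc (Suc (Suc 0)) \<and> (f = vsum us \<and> (\<forall>i<Suc (Suc (Suc 0)). us ! i \<in> [X, Y, Z] ! i)))" by auto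
      also have "\<dots> \<longleftrightarrow> (\<exists>u v w. f = vsum [u,v,w] \<and> (\<forall>i<Suc (Suc (Suc 0)). [u,v,w] ! i \<in> [X, Y, Z] ! i))" by (rule ex_list3)
      also have "\<dots> \<longleftrightarrow> f \<in> {(\<lambda>t. u t + (v t + w t)) | u v w. u \<in> X \<and> v \<in> Y \<and> w \<in> Z}" by (simp add: lt3 vsum3)
      finally show "?thesis f" .
    qed
    thus ?thesis by blast
  qed
  have u: "(\<forall>us. length us = length [X, Y, Z] \<and> (\<forall>i<length [X, Y, Z]. us ! i \<in> [X, Y, Z] ! i) \<and> vsum us = (\<lambda>x. 0)
        \<longrightarrow> (\<forall>i<length [X, Y, Z]. us ! i = (\<lambda>x. 0)))
      \<longleftrightarrow> (\<forall>u\<in>X. \<forall>v\<in>Y. \<forall>w\<in>Z. (\<lambda>t. u t + (v t + w t)) = (\<lambda>t. 0) \<longrightarrow> u = (\<lambda>t. 0) \<and> v = (\<lambda>t. 0) \<and> w = (\<lambda>t. 0))"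
  proof -
    have "(\<forall>us. length us = length [X, Y, Z] \<and> (\<forall>i<length [X, Y, Z]. us ! i \<in> [X, Y, Z] ! i) \<and> vsum us = (\<lambda>x. 0)
        \<longrightarrow> (\<forall>i<length [X, Y, Z]. us ! i = (\<lambda>x. 0)))
      \<longleftrightarrow> (\<forall>us. length us = Suc (Suc (Suc 0)) \<longrightarrow> ((\<forall>i<Suc (Suc (Suc 0)). us ! i \<in> [X, Y, Z] ! i) \<and> vsum us = (\<lambda>x. 0)
        \<longrightarrow> (\<forall>i<Suc (Suc (Suc 0)). us ! i = (\<lambda>x. 0))))" by auto
    also have "\<dots> \<longleftrightarrow> (\<forall>u v w. ((\<forall>i<Suc (Suc (Suc 0)). [u,v,w] ! i \<in> [X, Y, Z] ! i) \<and> vsum [u,v,w] = (\<lambda>x. 0)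
        \<longrightarrow> (\<forall>i<Suc (Suc (Suc 0)). [u,v,w] ! i = (\<lambda>x. 0))))" by (rule all_list3)
    also have "\<dots> \<longleftrightarrow> (\<forall>u\<in>X. \<forall>v\<in>Y. \<forall>w\<in>Z. (\<lambda>t. u t + (v t + w t)) = (\<lambda>t. 0) \<longrightarrow> u = (\<lambda>t. 0) \<and> v = (\<lambda>t. 0) \<and> w = (\<lambda>t. 0))"
      by (simp add: lt3 vsum3) blast
    finally show ?thesis .
  qed
  show ?thesis unfolding is_direct_sum_def s u ..
qed

lemma rspan_mem:
  fixes g :: "'a \<Rightarrow> 'g \<Rightarrow> 'r::comm_ring_1"
  assumes "finite X" "X \<subseteq> Y"
  shows "(\<lambda>t. \<Sum>q\<in>X. f q * g q t) \<in> rspan (g ` Y)"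
proof -
  define c where "c s = (\<Sum>q\<in>{q\<in>X. g q = s}. f q)" for s
  have "(\<lambda>t. \<Sum>q\<in>X. f q * g q t) = (\<lambda>t. \<Sum>s\<in>g ` X. c s * s t)"
  proof
    fix t
    have "(\<Sum>q\<in>X. f q * g q t) = (\<Sum>s\<in>g ` X. \<Sum>q\<in>{q\<in>X. g q = s}. f q * g q t)"
      by (rule sum.image_gen[OF assms(1)])
    also have "\<dots> = (\<Sum>s\<in>g ` X. \<Sum>q\<in>{q\<in>X. g q = s}. f q * s t)"
      by (rule sum.cong[OF refl], rule sum.cong[OF refl]) simp
    also have "\<dots> = (\<Sum>s\<in>g ` X. c s * s t)" by (simp add: c_def sum_distrib_right)
    finally show "(\<Sum>q\<in>X. f q * g q t) = (\<Sum>s\<in>g ` X. c s * s t)" .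
  qed
  moreover have "finite (g ` X)" "g ` X \<subseteq> g ` Y" using assms by auto
  ultimately show ?thesis unfolding rspan_def by blast
qed

lemma rspan_elim:
  assumes "u \<in> rspan S"
  obtains F c where "finite F" "F \<subseteq> S" "u = (\<lambda>x. \<Sum>s\<in>F. c s * s x)"
  using assms unfolding rspan_def by blast

lemma rspan_vanish:
  assumes "u \<in> rspan S" "\<And>s. s \<in> S \<Longrightarrow> s t = 0"
  shows "u t = 0"
proof -
  obtain F c where F: "finite F" "F \<subseteq> S" "u = (\<lambda>x. \<Sum>s\<in>F. c s * s x)" using rspan_elim[OF assms(1)] by blast
  have "\<forall>s\<in>F. c s * s t = 0"
  proof
    fix s assume "s \<in> F"
    hence "s t = 0" using F(2) assms(2) by blast
    thus "c s * s t = 0" by simp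
  qed
  hence "(\<Sum>s\<in>F. c s * s t) = 0" by (rule sum.neutral)
  thus ?thesis using F(3) by simp
qed

lemma rspan_A:
  assumes "S \<subseteq> matsuo_carrier D" "u \<in> rspan S"
  shows "u \<in> matsuo_carrier D"
proof -
  obtain F c where F: "finite F" "F \<subseteq> S" "u = (\<lambda>x. \<Sum>s\<in>F. c s * s x)" using rspan_elim[OF assms(2)] by blast
  have "supp u \<subseteq> (\<Union>s\<in>F. supp s)" unfolding F(3) using supp_comb[of c "\<lambda>s. s" F] by simp
  moreover have "finite (\<Union>s\<in>F. supp s)" "(\<Union>s\<in>F. supp s) \<subseteq> D"
    using F assms(1) unfolding matsuo_carrier_def by auto
  ultimately show ?thesis unfolding matsuo_carrier_def by (auto intro: finite_subset)
qed

context sfsl begin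

lemma ad_expand:
  fixes v :: "'a \<Rightarrow> 'r::comm_ring_1"
  assumes "finite (supp v)"
  shows "ad v = (\<lambda>t. \<Sum>q\<in>supp v. v q * K q t)"
  using ad_formula[OF fin_ell assms, of v G D] by auto

lemma ad_A:
  fixes v :: "'a \<Rightarrow> 'r::comm_ring_1"
  assumes "finite (supp v)"
  shows "ad v \<in> matsuo_carrier D"
proof -
  have "supp (ad v) \<subseteq> (\<Union>q\<in>supp v. supp (K q :: _ \<Rightarrow> 'r))"
    unfolding ad_expand[OF assms] by (rule supp_comb)
  moreover have "finite (\<Union>q\<in>supp v. supp (K q :: _ \<Rightarrow> 'r))" "(\<Union>q\<in>supp v. supp (K q :: _ \<Rightarrow> 'r)) \<subseteq> D"
    using assms K_A[where 'r='r] unfolding matsuo_carrier_def by auto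
  ultimately show ?thesis unfolding matsuo_carrier_def by (auto intro: finite_subset)
qed

lemma ad_zero: "ad (\<lambda>x. 0::'r::comm_ring_1) = (\<lambda>x. 0)"
  using ad_formula[OF fin_ell, of "{}" "\<lambda>x. 0::'r"] by (auto simp: supp_def)

lemma K_fin: "finite (supp (K q :: _ \<Rightarrow> 'r::comm_ring_1))"
  using K_A[where 'r='r] unfolding matsuo_carrier_def by auto

lemma adK:
  assumes two: "(2::'r::comm_ring_1) = 0"
  shows "ad (K q :: _ \<Rightarrow> 'r) = K q"
proof (cases "q \<in> P2'")
  case False
  thus ?thesis using K_zero[OF two False] ad_zero by simp
next
  case True
  obtain p1 p2 p3 where e: "{p1,p2,p3} = ell" and g: "goodz p1 p2 p3 q" using enum[OF True] by blast
  define x where "x = wdg p1 q"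
  define y where "y = wdg p2 q"
  note F = goodz_full[OF g, folded x_def y_def]
  have Kq: "(K q :: _ \<Rightarrow> 'r) = (\<lambda>t. pt p1 t + pt p2 t + pt x t + pt y t)"
    using K_P2[OF two g e] unfolding x_def y_def .
  let ?T = "{p1,p2,x,y}"
  have sT: "supp (K q :: _ \<Rightarrow> 'r) \<subseteq> ?T" unfolding Kq supp_def by (auto simp: pt_def)
  have e2: "{p1,p3,p2} = ell" "{p2,p3,p1} = ell" using e by auto
  have Kx: "(K x :: _ \<Rightarrow> 'r) = (\<lambda>t. pt p1 t + pt p3 t + pt q t + pt y t)"
    using K_P2[OF two F(13) e2(1)] F(15,16) by simp
  have Ky: "(K y :: _ \<Rightarrow> 'r) = (\<lambda>t. pt p2 t + pt p3 t + pt q t + pt x t)"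
    using K_P2[OF two F(14) e2(2)] F(17,18) by simp
  have p12: "p1 \<notin> P2'" "p2 \<notin> P2'" using e unfolding P2'_def by auto
  have K12: "(K p1 :: _ \<Rightarrow> 'r) = (\<lambda>t. 0)" "(K p2 :: _ \<Rightarrow> 'r) = (\<lambda>t. 0)"
    using K_zero[OF two p12(1)] K_zero[OF two p12(2)] by auto
  show ?thesis
  proof
    fix t
    have "ad (K q :: _ \<Rightarrow> 'r) t = (\<Sum>s\<in>?T. K q s * K s t)"
      by (rule ad_formula[OF fin_ell _ sT]) simp
    also have "\<dots> = (\<Sum>s\<in>?T. K s t * pt p1 s) + (\<Sum>s\<in>?T. K s t * pt p2 s) + (\<Sum>s\<in>?T. K s t * pt x s) + (\<Sum>s\<in>?T. K s t * pt y s)"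
      unfolding Kq by (simp add: sum.distrib algebra_simps)
    also have "\<dots> = K p1 t + K p2 t + K x t + K y t"
      by (simp only: sum_pt_right[OF finite.insertI[OF finite.insertI[OF finite.insertI[OF finite.insertI[OF finite.emptyI]]]]]) simp
    also have "\<dots> = (pt p1 t + pt p2 t + pt x t + pt y t) + (pt p3 t + pt p3 t) + (pt q t + pt q t)"
      unfolding K12 Kx Ky by (simp add: ac_simps)
    also have "\<dots> = K q t" unfolding Kq by (simp add: two0[OF two])
    finally show "ad (K q :: _ \<Rightarrow> 'r) t = K q t" .
  qed
qed

lemma ad_ad:
  fixes v :: "'a \<Rightarrow> 'r::comm_ring_1"
  assumes two: "(2::'r) = 0" and "finite (supp v)"
  shows "ad (ad v) = ad v"
proof -
  have "ad (ad v) = (\<lambda>t. \<Sum>q\<in>supp v. v q * ad (K q) t)"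
    unfolding ad_expand[OF assms(2)] by (rule ad_lin[OF fin_ell assms(2) K_fin])
  also have "\<dots> = ad v" unfolding ad_expand[OF assms(2)] adK[OF two] ..
  finally show ?thesis .
qed

end


lemma A_comb:
  assumes "u \<in> matsuo_carrier D" "w \<in> matsuo_carrier D"
  shows "(\<lambda>t. c1 * u t + c2 * w t :: 'r::comm_ring_1) \<in> matsuo_carrier D"
proof -
  have "supp (\<lambda>t. c1 * u t + c2 * w t) \<subseteq> supp u \<union> supp w" by (auto simp: supp_def)
  thus ?thesis using assms unfolding matsuo_carrier_def by (auto intro: finite_subset)
qed

lemma A_fin: "u \<in> matsuo_carrier D \<Longrightarrow> finite (supp u)" unfolding matsuo_carrier_def by simp

context sfsl begin

lemma main1:
  assumes two: "(2::'r::comm_ring_1) = 0"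
  shows "is_direct_sum [{v \<in> (matsuo_carrier D :: ('a \<Rightarrow> 'r) set). ad v = (\<lambda>x. 0)}, {v \<in> matsuo_carrier D. ad v = v}] (matsuo_carrier D)"
  unfolding is_direct_sum2
proof (rule conjI[OF _ ballI[OF ballI[OF impI]]])
  let ?A = "matsuo_carrier D :: ('a \<Rightarrow> 'r) set"
  show "?A = {(\<lambda>t. u t + w t) |u w. u \<in> {v \<in> ?A. ad v = (\<lambda>x. 0)} \<and> w \<in> {v \<in> ?A. ad v = v}}"
  proof (rule Set.set_eqI, rule iffI)
    fix v assume v: "v \<in> ?A"
    have fv: "finite (supp v)" using A_fin[OF v] .
    have av: "ad v \<in> ?A" using ad_A[OF fv] .
    define u where "u = (\<lambda>t. 1 * v t + (-1) * ad v t)"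
    have uA: "u \<in> ?A" unfolding u_def by (rule A_comb[OF v av])
    have "ad u = (\<lambda>t. 1 * ad v t + (-1) * ad (ad v) t)"
      unfolding u_def by (rule ad_add2[OF fin_ell fv A_fin[OF av]])
    hence "ad u = (\<lambda>x. 0)" using ad_ad[OF two fv] by simp
    moreover have "ad (ad v) = ad v" using ad_ad[OF two fv] .
    moreover have "v = (\<lambda>t. u t + ad v t)" unfolding u_def by simp
    ultimately show "v \<in> {(\<lambda>t. u t + w t) |u w. u \<in> {v \<in> ?A. ad v = (\<lambda>x. 0)} \<and> w \<in> {v \<in> ?A. ad v = v}}"
      using uA av by blast
  next
    fix v assume "v \<in> {(\<lambda>t. u t + w t) |u w. u \<in> {v \<in> ?A. ad v = (\<lambda>x. 0)} \<and> w \<in> {v \<in> ?A. ad v = v}}"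
    then obtain u w where "v = (\<lambda>t. u t + w t)" "u \<in> ?A" "w \<in> ?A" by blast
    thus "v \<in> ?A" using A_comb[of u D w 1 1] by simp
  qed
next
  fix u w assume u: "u \<in> {v \<in> (matsuo_carrier D :: ('a \<Rightarrow> 'r) set). ad v = (\<lambda>x. 0)}"
    and w: "w \<in> {v \<in> (matsuo_carrier D :: ('a \<Rightarrow> 'r) set). ad v = v}" and s: "(\<lambda>t. u t + w t) = (\<lambda>t. 0)"
  have fu: "finite (supp u)" and fw: "finite (supp w)" using u w A_fin by auto
  have e: "ad (\<lambda>t. 1 * u t + 1 * w t) = (\<lambda>t. 1 * ad u t + 1 * ad w t)" by (rule ad_add2[OF fin_ell fu fw])
  have "(\<lambda>t. 1 * u t + 1 * w t) = (\<lambda>t. 0::'r)" using s by simp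
  hence "ad (\<lambda>t. 0::'r) = (\<lambda>t. 1 * ad u t + 1 * ad w t)" using e by simp
  hence "(\<lambda>t. 0::'r) = (\<lambda>t. ad u t + ad w t)" using ad_zero[where 'r='r] by simp
  moreover have au: "ad u = (\<lambda>x. 0)" and aw: "ad w = w" using u w by auto
  ultimately have "(\<lambda>t. 0::'r) = (\<lambda>t. 0 + w t)" by (simp only: au aw)
  hence w0: "(\<lambda>t. 0::'r) = w" by simp
  hence "u = (\<lambda>t. 0)" using s by (metis add.right_neutral)
  thus "u = (\<lambda>t. 0) \<and> w = (\<lambda>t. 0)" using w0 by simp
qed

lemma main3:
  assumes two: "(2::'r::comm_ring_1) = 0"
  shows "{v \<in> (matsuo_carrier D :: ('a \<Rightarrow> 'r) set). ad v = v} = rspan ((\<lambda>z. ad (pt z)) ` P2')"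
proof (intro Set.set_eqI iffI)
  fix v :: "'a \<Rightarrow> 'r" assume "v \<in> {v \<in> matsuo_carrier D. ad v = v}"
  hence vA: "v \<in> matsuo_carrier D" and av: "ad v = v" by auto
  have fv: "finite (supp v)" using A_fin[OF vA] .
  have "v = (\<lambda>t. \<Sum>q\<in>supp v. v q * K q t)" using av ad_expand[OF fv] by simp
  also have "\<dots> = (\<lambda>t. \<Sum>q\<in>supp v \<inter> P2'. v q * ad (pt q) t)"
  proof
    fix t
    have "(\<Sum>q\<in>supp v. v q * K q t) = (\<Sum>q\<in>supp v \<inter> P2'. v q * K q t)"
      by (rule sum.mono_neutral_right[OF fv]) (auto simp: K_zero[OF two])
    thus "(\<Sum>q\<in>supp v. v q * K q t) = (\<Sum>q\<in>supp v \<inter> P2'. v q * ad (pt q) t)"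
      by (simp add: ad_pt[OF fin_ell])
  qed
  finally have "v = (\<lambda>t. \<Sum>q\<in>supp v \<inter> P2'. v q * ad (pt q) t)" .
  moreover have "(\<lambda>t. \<Sum>q\<in>supp v \<inter> P2'. v q * ad (pt q) t) \<in> rspan ((\<lambda>z. ad (pt z)) ` P2')"
    by (rule rspan_mem) (use fv in auto)
  ultimately show "v \<in> rspan ((\<lambda>z. ad (pt z)) ` P2')" by simp
next
  fix u :: "'a \<Rightarrow> 'r" assume u: "u \<in> rspan ((\<lambda>z. ad (pt z)) ` P2')"
  have SA: "(\<lambda>z. ad (pt z :: 'a \<Rightarrow> 'r)) ` P2' \<subseteq> matsuo_carrier D"
    using K_A[where 'r='r] by (auto simp: ad_pt[OF fin_ell])
  have uA: "u \<in> matsuo_carrier D" by (rule rspan_A[OF SA u])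
  obtain F c where F: "finite F" "F \<subseteq> (\<lambda>z. ad (pt z)) ` P2'" "u = (\<lambda>x. \<Sum>s\<in>F. c s * s x)"
    using rspan_elim[OF u] by blast
  have fs: "\<And>s. s \<in> F \<Longrightarrow> finite (supp s)" using F(2) SA A_fin by blast
  have "ad u = (\<lambda>x. \<Sum>s\<in>F. c s * ad s x)" unfolding F(3) by (rule ad_lin[OF fin_ell F(1) fs])
  also have "\<dots> = u" unfolding F(3)
  proof (rule ext, rule sum.cong[OF refl])
    fix s x assume "s \<in> F"
    then obtain z where "s = ad (pt z)" using F(2) by blast
    hence "ad s = s" using adK[OF two] by (simp add: ad_pt[OF fin_ell])
    thus "c s * ad s x = c s * s x" by simp
  qed
  finally show "u \<in> {v \<in> matsuo_carrier D. ad v = v}" using uA by simp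
qed

end


lemma eq_of_sum0: "(2::'r::comm_ring_1) = 0 \<Longrightarrow> (x::'r) + y = 0 \<Longrightarrow> x = y"
  by (metis add.commute add_left_cancel two0)

lemma pt_A: "p \<in> D \<Longrightarrow> (pt p :: _ \<Rightarrow> 'r::comm_ring_1) \<in> matsuo_carrier D"
  unfolding matsuo_carrier_def by (simp add: supp_pt)

lemma setvec_A: "finite S \<Longrightarrow> S \<subseteq> D \<Longrightarrow> (setvec S :: _ \<Rightarrow> 'r::comm_ring_1) \<in> matsuo_carrier D"
  unfolding matsuo_carrier_def by (simp add: supp_setvec)

lemma setvec_as_comb: "finite S \<Longrightarrow> (setvec S :: _ \<Rightarrow> 'r::comm_ring_1) = (\<lambda>t. \<Sum>p\<in>S. 1 * pt p t)"
  unfolding setvec_def by simp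

context sfsl begin

definition P0' where "P0' = {w \<in> D. w \<notin> ell \<and> (\<forall>p\<in>ell. \<not> col w p)}"

definition Qof where "Qof z = (THE \<pi>. \<pi> \<in> Qs \<and> z \<in> \<pi>)"

lemma Qof_prop:
  assumes "z \<in> P2'"
  shows "Qof z \<in> Qs" "z \<in> Qof z"
proof -
  have zl: "z \<notin> ell" using assms unfolding P2'_def by blast
  have "\<exists>!\<pi>. \<pi> \<in> Qs \<and> z \<in> \<pi>"
  proof (rule ex_ex1I)
    show "\<exists>\<pi>. \<pi> \<in> Qs \<and> z \<in> \<pi>" using Qs_ex[OF assms] by blast
  next
    fix \<pi> \<pi>' assume "\<pi> \<in> Qs \<and> z \<in> \<pi>" "\<pi>' \<in> Qs \<and> z \<in> \<pi>'"
    thus "\<pi> = \<pi>'" using Qs_uniq zl by blast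
  qed
  hence "Qof z \<in> Qs \<and> z \<in> Qof z" unfolding Qof_def by (rule theI')
  thus "Qof z \<in> Qs" "z \<in> Qof z" by auto
qed

lemma Qof_eq: "\<pi> \<in> Qs \<Longrightarrow> z \<in> \<pi> \<Longrightarrow> z \<notin> ell \<Longrightarrow> Qof z = \<pi>"
  using Qof_prop Qform Qs_uniq by metis

lemma P0_P2_disj: "z \<in> P0' \<Longrightarrow> z \<notin> P2'" unfolding P0'_def P2'_def by blast

lemma D_cases: "t \<in> D \<Longrightarrow> t \<notin> ell \<Longrightarrow> t \<in> P0' \<or> t \<in> P2'"
  unfolding P0'_def P2'_def by blast

lemma ad_at:
  fixes v :: "'a \<Rightarrow> 'r::comm_ring_1"
  assumes two: "(2::'r) = 0" and fv: "finite (supp v)" and g: "goodz p1 p2 p3 z" and e: "{p1,p2,p3} = ell"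
  shows "ad v z = v (wdg p1 z) + v (wdg p2 z)"
proof -
  let ?T = "supp v \<union> {wdg p1 z, wdg p2 z}"
  have fT: "finite ?T" using fv by simp
  have "ad v z = (\<Sum>q\<in>?T. v q * K q z)" by (rule ad_formula[OF fin_ell fT]) blast
  also have "\<dots> = (\<Sum>q\<in>?T. v q * pt (wdg p1 z) q) + (\<Sum>q\<in>?T. v q * pt (wdg p2 z) q)"
    by (simp add: K_val[OF two g e] sum.distrib algebra_simps)
  also have "\<dots> = v (wdg p1 z) + v (wdg p2 z)" unfolding sum_pt_right[OF fT] by simp
  finally show ?thesis .
qed

lemma constancy:
  fixes v :: "'a \<Rightarrow> 'r::comm_ring_1"
  assumes two: "(2::'r) = 0" and fv: "finite (supp v)" and av: "ad v = (\<lambda>x. 0)"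
    and pi: "\<pi> \<in> Qs" and z: "z \<in> \<pi>" "z \<notin> ell" and z': "z' \<in> \<pi>" "z' \<notin> ell"
  shows "v z = v z'"
proof -
  have zP: "z \<in> P2'" using Qform[OF pi z] by blast
  obtain p1 p2 p3 where e: "{p1,p2,p3} = ell" and g: "goodz p1 p2 p3 z" using enum[OF zP] by blast
  define x where "x = wdg p1 z"
  define y where "y = wdg p2 z"
  note F = goodz_full[OF g, folded x_def y_def]
  have pf: "\<pi> = {p1,p2,p3,z,x,y}" using Qform[OF pi z] e g unfolding x_def y_def by blast
  have e2: "{p1,p3,p2} = ell" using e by auto
  have "ad v z = v x + v y" using ad_at[OF two fv g e] unfolding x_def y_def .
  hence xy: "v x = v y" using av eq_of_sum0[OF two] by simp
  have "ad v x = v z + v y" using ad_at[OF two fv F(13) e2] F(15,16) by simp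
  hence zy: "v z = v y" using av eq_of_sum0[OF two] by simp
  have "z' \<in> {z,x,y}" using z' pf e by auto
  thus ?thesis using xy zy by auto
qed

lemma ad_setvec:
  assumes two: "(2::'r::comm_ring_1) = 0" and pi: "\<pi> \<in> Qs"
  shows "ad (setvec \<pi> :: _ \<Rightarrow> 'r) = (\<lambda>x. 0)"
proof -
  obtain z where z: "z \<in> \<pi>" "z \<notin> ell" using Qs_nonl[OF pi] by blast
  have zP: "z \<in> P2'" using Qform[OF pi z] by blast
  obtain p1 p2 p3 where e: "{p1,p2,p3} = ell" and g: "goodz p1 p2 p3 z" using enum[OF zP] by blast
  define x where "x = wdg p1 z"
  define y where "y = wdg p2 z"
  note F = goodz_full[OF g, folded x_def y_def]
  have pf: "\<pi> = {p1,p2,p3,z,x,y}" using Qform[OF pi z] e g unfolding x_def y_def by blast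
  have fp: "finite \<pi>" using Qs_props(1)[OF pi] .
  have e2: "{p1,p3,p2} = ell" "{p2,p3,p1} = ell" using e by auto
  have Kz: "(K z :: _ \<Rightarrow> 'r) = (\<lambda>t. pt p1 t + pt p2 t + pt x t + pt y t)"
    using K_P2[OF two g e] unfolding x_def y_def .
  have Kx: "(K x :: _ \<Rightarrow> 'r) = (\<lambda>t. pt p1 t + pt p3 t + pt z t + pt y t)"
    using K_P2[OF two F(13) e2(1)] F(15,16) by simp
  have Ky: "(K y :: _ \<Rightarrow> 'r) = (\<lambda>t. pt p2 t + pt p3 t + pt z t + pt x t)"
    using K_P2[OF two F(14) e2(2)] F(17,18) by simp
  have "ad (setvec \<pi> :: _ \<Rightarrow> 'r) = (\<lambda>t. \<Sum>p\<in>\<pi>. 1 * ad (pt p) t)"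
    unfolding setvec_as_comb[OF fp] by (rule ad_lin[OF fin_ell fp]) (simp add: supp_pt)
  also have "\<dots> = (\<lambda>t. \<Sum>p\<in>\<pi>. K p t)" by (simp add: ad_pt[OF fin_ell])
  also have "\<dots> = (\<lambda>t. \<Sum>p\<in>{z,x,y}. K p t)"
  proof (rule ext, rule sum.mono_neutral_right[OF fp])
    show "{z,x,y} \<subseteq> \<pi>" using pf by auto
  next
    fix t show "\<forall>p\<in>\<pi> - {z,x,y}. (K p t :: 'r) = 0"
    proof
      fix p assume "p \<in> \<pi> - {z,x,y}"
      hence "p \<in> ell" using pf e by auto
      hence "p \<notin> P2'" unfolding P2'_def by blast
      thus "(K p t :: 'r) = 0" using K_zero[OF two] by simp
    qed
  qed
  also have "\<dots> = (\<lambda>t. K z t + K x t + K y t)"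
    using F(6,7,8) by (simp add: add.assoc)
  also have "\<dots> = (\<lambda>t. (pt p1 t + pt p1 t) + (pt p2 t + pt p2 t) + (pt p3 t + pt p3 t)
      + (pt x t + pt x t) + (pt y t + pt y t) + (pt z t + pt z t))"
    unfolding Kz Kx Ky by (simp add: ac_simps)
  also have "\<dots> = (\<lambda>t. 0)" by (simp add: two0[OF two])
  finally show ?thesis .
qed

lemma rspan_ad0:
  assumes S: "S \<subseteq> (matsuo_carrier D :: ('a \<Rightarrow> 'r::comm_ring_1) set)" "\<And>s. s \<in> S \<Longrightarrow> ad s = (\<lambda>x. 0)"
    and u: "u \<in> rspan S"
  shows "ad u = (\<lambda>x. 0)"
proof -
  obtain F c where F: "finite F" "F \<subseteq> S" "u = (\<lambda>x. \<Sum>s\<in>F. c s * s x)" using rspan_elim[OF u] by blast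
  have fs: "\<And>s. s \<in> F \<Longrightarrow> finite (supp s)" using F(2) S(1) A_fin by blast
  have "ad u = (\<lambda>x. \<Sum>s\<in>F. c s * ad s x)" unfolding F(3) by (rule ad_lin[OF fin_ell F(1) fs])
  also have "\<dots> = (\<lambda>x. 0)"
  proof (rule ext, rule sum.neutral, rule ballI)
    fix x s assume "s \<in> F"
    hence "ad s = (\<lambda>x. 0)" using F(2) S(2) by blast
    thus "c s * ad s x = 0" by simp
  qed
  finally show ?thesis .
qed

end

context sfsl begin

lemma setvec_Q_val: "\<pi> \<in> Qs \<Longrightarrow> (setvec \<pi> t :: 'r::comm_ring_1) = (if t \<in> \<pi> then 1 else 0)"
  by (rule setvec_ind[OF Qs_props(1)])

lemma main2_decomp:
  fixes v :: "'a \<Rightarrow> 'r::comm_ring_1"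
  assumes two: "(2::'r) = 0" and vA: "v \<in> matsuo_carrier D" and av: "ad v = (\<lambda>x. 0)"
  shows "\<exists>u1 u2 u3. u1 \<in> rspan (pt ` ell) \<and> u2 \<in> rspan (setvec ` Qs) \<and> u3 \<in> rspan (pt ` P0')
     \<and> v = (\<lambda>t. u1 t + (u2 t + u3 t))"
proof -
  have fv: "finite (supp v)" using A_fin[OF vA] .
  have sD: "supp v \<subseteq> D" using vA unfolding matsuo_carrier_def by simp
  define X3 where "X3 = supp v \<inter> P0'"
  define u3 where "u3 = (\<lambda>t. \<Sum>q\<in>X3. v q * pt q t)"
  have fX3: "finite X3" unfolding X3_def using fv by simp
  have u3R: "u3 \<in> rspan (pt ` P0')" unfolding u3_def by (rule rspan_mem[OF fX3]) (auto simp: X3_def)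
  have u3v: "u3 t = (if t \<in> X3 then v t else 0)" for t unfolding u3_def by (rule sum_pt_left[OF fX3])
  define X2 where "X2 = Qof ` (supp v \<inter> P2')"
  define al where "al \<pi> = v (SOME z. z \<in> \<pi> \<and> z \<notin> ell)" for \<pi>
  define u2 where "u2 = (\<lambda>t. \<Sum>\<pi>\<in>X2. al \<pi> * setvec \<pi> t)"
  have fX2: "finite X2" unfolding X2_def using fv by simp
  have X2Q: "X2 \<subseteq> Qs" unfolding X2_def using Qof_prop(1) by blast
  have u2R: "u2 \<in> rspan (setvec ` Qs)" unfolding u2_def by (rule rspan_mem[OF fX2 X2Q])
  define u1 where "u1 = (\<lambda>t. \<Sum>q\<in>ell. (v q - (u2 q + u3 q)) * pt q t)"
  have u1R: "u1 \<in> rspan (pt ` ell)" unfolding u1_def by (rule rspan_mem) auto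
  have u1v: "u1 t = (if t \<in> ell then v t - (u2 t + u3 t) else 0)" for t
    unfolding u1_def by (rule sum_pt_left) simp
  have C: "v t = u2 t + u3 t" if tl: "t \<notin> ell" for t
  proof (cases "t \<in> D")
    case False
    have "v t = 0" using sD False unfolding supp_def by blast
    moreover have "u3 t = 0" using False u3v unfolding X3_def P0'_def by auto
    moreover have "u2 t = 0" unfolding u2_def
    proof (rule sum.neutral, rule ballI)
      fix \<pi> assume "\<pi> \<in> X2"
      hence "\<pi> \<in> Qs" using X2Q by blast
      hence "t \<notin> \<pi>" using Qs_props(2) False by blast
      thus "al \<pi> * setvec \<pi> t = 0" using setvec_Q_val[OF \<open>\<pi> \<in> Qs\<close>, where 'r='r] by simp
    qed
    ultimately show ?thesis by simp
  next
    case True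
    from D_cases[OF True tl] show ?thesis
    proof
      assume t0: "t \<in> P0'"
      have "u3 t = v t" using u3v t0 unfolding X3_def supp_def by auto
      moreover have "u2 t = 0" unfolding u2_def
      proof (rule sum.neutral, rule ballI)
        fix \<pi> assume "\<pi> \<in> X2"
        hence "\<pi> \<in> Qs" using X2Q by blast
        hence "t \<notin> \<pi>" using Qs_sub P0_P2_disj[OF t0] tl by blast
        thus "al \<pi> * setvec \<pi> t = 0" using setvec_Q_val[OF \<open>\<pi> \<in> Qs\<close>, where 'r='r] by simp
      qed
      ultimately show ?thesis by simp
    next
      assume t2: "t \<in> P2'"
      have "u3 t = 0" using u3v P0_P2_disj t2 unfolding X3_def by auto
      define \<pi>0 where "\<pi>0 = Qof t"
      have p0: "\<pi>0 \<in> Qs" "t \<in> \<pi>0" using Qof_prop[OF t2] unfolding \<pi>0_def by auto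
      have "u2 t = (\<Sum>\<pi>\<in>X2. if \<pi> = \<pi>0 then al \<pi> else 0)" unfolding u2_def
      proof (rule sum.cong[OF refl])
        fix \<pi> assume "\<pi> \<in> X2"
        hence pq: "\<pi> \<in> Qs" using X2Q by blast
        have "t \<in> \<pi> \<longleftrightarrow> \<pi> = \<pi>0" using Qs_uniq[OF pq p0(1) _ p0(2) tl] p0(2) by blast
        thus "al \<pi> * setvec \<pi> t = (if \<pi> = \<pi>0 then al \<pi> else 0)" using setvec_Q_val[OF pq, where 'r='r] by simp
      qed
      also have "\<dots> = (if \<pi>0 \<in> X2 then al \<pi>0 else 0)" by (rule sum.delta[OF fX2])
      also have "\<dots> = v t"
      proof (cases "\<pi>0 \<in> X2")
        case True
        have ex: "\<exists>z. z \<in> \<pi>0 \<and> z \<notin> ell" using p0 tl by blast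
        have sz: "(SOME z. z \<in> \<pi>0 \<and> z \<notin> ell) \<in> \<pi>0 \<and> (SOME z. z \<in> \<pi>0 \<and> z \<notin> ell) \<notin> ell"
          by (rule someI_ex[OF ex])
        have "al \<pi>0 = v t" unfolding al_def
          by (rule constancy[OF two fv av p0(1)]) (use sz p0(2) tl in auto)
        thus ?thesis using True by simp
      next
        case False
        have "t \<notin> supp v"
        proof
          assume "t \<in> supp v"
          hence "\<pi>0 \<in> X2" unfolding X2_def \<pi>0_def using t2 by blast
          thus False using False by simp
        qed
        thus ?thesis using False unfolding supp_def by simp
      qed
      finally show ?thesis using \<open>u3 t = 0\<close> by simp
    qed
  qed
  have "v = (\<lambda>t. u1 t + (u2 t + u3 t))"
  proof
    fix t show "v t = u1 t + (u2 t + u3 t)"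
      using u1v[of t] C[of t] by (cases "t \<in> ell") auto
  qed
  thus ?thesis using u1R u2R u3R by blast
qed

end

context sfsl begin

lemma main2_unique:
  fixes u1 u2 u3 :: "'a \<Rightarrow> 'r::comm_ring_1"
  assumes u1: "u1 \<in> rspan (pt ` ell)" and u2: "u2 \<in> rspan (setvec ` Qs)" and u3: "u3 \<in> rspan (pt ` P0')"
    and s: "(\<lambda>t. u1 t + (u2 t + u3 t)) = (\<lambda>t. 0)"
  shows "u1 = (\<lambda>t. 0) \<and> u2 = (\<lambda>t. 0) \<and> u3 = (\<lambda>t. 0)"
proof -
  have st: "u1 t + (u2 t + u3 t) = 0" for t using fun_cong[OF s, of t] by simp
  have z1: "u1 t = 0" if "t \<notin> ell" for t
    by (rule rspan_vanish[OF u1]) (use that in \<open>auto simp: pt_def\<close>)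
  have z3: "u3 t = 0" if "t \<notin> P0'" for t
    by (rule rspan_vanish[OF u3]) (use that in \<open>auto simp: pt_def\<close>)
  have z2: "u2 t = 0" if "t \<in> P0'" for t
  proof (rule rspan_vanish[OF u2])
    fix s :: "'a \<Rightarrow> 'r" assume "s \<in> setvec ` Qs"
    then obtain \<pi> where pq: "\<pi> \<in> Qs" and sp: "s = setvec \<pi>" by blast
    have "t \<notin> ell" using that unfolding P0'_def by blast
    hence "t \<notin> \<pi>" using Qs_sub[OF pq] P0_P2_disj[OF that] by blast
    thus "s t = 0" using setvec_Q_val[OF pq, where 'r='r] sp by simp
  qed
  have U3: "u3 = (\<lambda>t. 0)"
  proof
    fix t show "u3 t = 0"
    proof (cases "t \<in> P0'")
      case True
      have "t \<notin> ell" using True unfolding P0'_def by blast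
      thus ?thesis using st[of t] z1 z2[OF True] by simp
    next
      case False thus ?thesis by (rule z3)
    qed
  qed
  obtain F c where F: "finite F" "F \<subseteq> setvec ` Qs" "u2 = (\<lambda>x. \<Sum>s\<in>F. c s * s x)"
    using rspan_elim[OF u2] by blast
  have c0: "c s = 0" if sF: "s \<in> F" for s
  proof -
    obtain \<pi> where pq: "\<pi> \<in> Qs" and sp: "s = setvec \<pi>" using F(2) sF by blast
    obtain z where z: "z \<in> \<pi>" "z \<notin> ell" using Qs_nonl[OF pq] by blast
    have zP: "z \<in> P2'" using Qform[OF pq z] by (rule conjunct1)
    have "z \<notin> P0'" using P0_P2_disj zP by metis
    hence "u3 z = 0" by (rule z3)
    hence "u2 z = 0" using st[of z] z1[OF z(2)] by simp
    moreover have "u2 z = (\<Sum>s'\<in>F. if s' = s then c s' else 0)" unfolding F(3)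
    proof (rule sum.cong[OF refl])
      fix s' assume "s' \<in> F"
      then obtain \<pi>' where pq': "\<pi>' \<in> Qs" and sp': "s' = setvec \<pi>'" using F(2) by blast
      have "z \<in> \<pi>' \<longleftrightarrow> s' = s"
      proof
        assume "z \<in> \<pi>'"
        hence "\<pi>' = \<pi>" using Qs_uniq[OF pq' pq _ z] by blast
        thus "s' = s" using sp sp' by simp
      next
        assume "s' = s"
        hence "(s' z :: 'r) = 1" using sp setvec_Q_val[OF pq, where 'r='r] z(1) by simp
        thus "z \<in> \<pi>'" using sp' setvec_Q_val[OF pq', where 'r='r] by (auto split: if_splits)
      qed
      thus "c s' * s' z = (if s' = s then c s' else 0)" using sp' setvec_Q_val[OF pq', where 'r='r] by auto
    qed
    also have "\<dots> = c s" using sF by (simp add: sum.delta[OF F(1)])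
    finally show ?thesis by simp
  qed
  have U2: "u2 = (\<lambda>t. 0)" unfolding F(3) by (rule ext, rule sum.neutral) (simp add: c0)
  have U1: "u1 = (\<lambda>t. 0)" using st U2 U3 by auto
  show ?thesis using U1 U2 U3 by simp
qed

end

context sfsl begin

lemma main2:
  assumes two: "(2::'r::comm_ring_1) = 0"
  shows "is_direct_sum [rspan (pt ` ell), rspan (setvec ` Qs), rspan (pt ` P0')]
           {v \<in> (matsuo_carrier D :: ('a \<Rightarrow> 'r) set). ad v = (\<lambda>x. 0)}"
  unfolding is_direct_sum3
proof (rule conjI[OF _ ballI[OF ballI[OF ballI[OF impI]]]])
  let ?A = "matsuo_carrier D :: ('a \<Rightarrow> 'r) set"
  have S1: "pt ` ell \<subseteq> ?A"
  proof (rule image_subsetI)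
    fix p assume "p \<in> ell" hence "p \<in> D" using ell_D by blast
    thus "pt p \<in> ?A" by (rule pt_A)
  qed
  have S2: "setvec ` Qs \<subseteq> ?A"
  proof (rule image_subsetI)
    fix \<pi> assume pq: "\<pi> \<in> Qs"
    show "setvec \<pi> \<in> ?A" by (rule setvec_A[OF Qs_props(1)[OF pq] Qs_props(2)[OF pq]])
  qed
  have S3: "pt ` P0' \<subseteq> ?A"
  proof (rule image_subsetI)
    fix p assume "p \<in> P0'" hence "p \<in> D" unfolding P0'_def by blast
    thus "pt p \<in> ?A" by (rule pt_A)
  qed
  have Z1: "\<And>s. s \<in> pt ` ell \<Longrightarrow> ad s = (\<lambda>x. 0::'r)"
  proof -
    fix s :: "'a \<Rightarrow> 'r" assume "s \<in> pt ` ell"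
    then obtain p where p: "p \<in> ell" "s = pt p" by blast
    have "p \<notin> P2'" using p(1) unfolding P2'_def by blast
    thus "ad s = (\<lambda>x. 0)" using K_zero[OF two] p(2) by (simp add: ad_pt[OF fin_ell])
  qed
  have Z2: "\<And>s. s \<in> setvec ` Qs \<Longrightarrow> ad s = (\<lambda>x. 0::'r)"
  proof -
    fix s :: "'a \<Rightarrow> 'r" assume "s \<in> setvec ` Qs"
    then obtain \<pi> where p: "\<pi> \<in> Qs" "s = setvec \<pi>" by blast
    show "ad s = (\<lambda>x. 0)" unfolding p(2) by (rule ad_setvec[OF two p(1)])
  qed
  have Z3: "\<And>s. s \<in> pt ` P0' \<Longrightarrow> ad s = (\<lambda>x. 0::'r)"
  proof -
    fix s :: "'a \<Rightarrow> 'r" assume "s \<in> pt ` P0'"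
    then obtain p where p: "p \<in> P0'" "s = pt p" by blast
    have "p \<notin> P2'" using P0_P2_disj[OF p(1)] .
    thus "ad s = (\<lambda>x. 0)" using K_zero[OF two] p(2) by (simp add: ad_pt[OF fin_ell])
  qed
  show "{v \<in> ?A. ad v = (\<lambda>x. 0)} = {(\<lambda>t. u t + (v t + w t)) |u v w.
          u \<in> rspan (pt ` ell) \<and> v \<in> rspan (setvec ` Qs) \<and> w \<in> rspan (pt ` P0')}"
  proof (rule Set.set_eqI, rule iffI)
    fix v :: "'a \<Rightarrow> 'r" assume "v \<in> {v \<in> ?A. ad v = (\<lambda>x. 0)}"
    hence "v \<in> ?A" "ad v = (\<lambda>x. 0)" by auto
    from main2_decomp[OF two this] obtain u1 u2 u3 where h: "u1 \<in> rspan (pt ` ell)"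
      "u2 \<in> rspan (setvec ` Qs)" "u3 \<in> rspan (pt ` P0')" "v = (\<lambda>t. u1 t + (u2 t + u3 t))" by blast
    show "v \<in> {(\<lambda>t. u t + (v t + w t)) |u v w.
          u \<in> rspan (pt ` ell) \<and> v \<in> rspan (setvec ` Qs) \<and> w \<in> rspan (pt ` P0')}"
      by (rule CollectI, rule exI[of _ u1], rule exI[of _ u2], rule exI[of _ u3]) (use h in simp)
  next
    fix x :: "'a \<Rightarrow> 'r" assume "x \<in> {(\<lambda>t. u t + (v t + w t)) |u v w.
          u \<in> rspan (pt ` ell) \<and> v \<in> rspan (setvec ` Qs) \<and> w \<in> rspan (pt ` P0')}"
    then obtain u v w :: "'a \<Rightarrow> 'r" where x: "x = (\<lambda>t. u t + (v t + w t))" and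
      u: "u \<in> rspan (pt ` ell)" and v: "v \<in> rspan (setvec ` Qs)" and w: "w \<in> rspan (pt ` P0')" by blast
    have uA: "u \<in> ?A" by (rule rspan_A[OF S1 u])
    have vA: "v \<in> ?A" by (rule rspan_A[OF S2 v])
    have wA: "w \<in> ?A" by (rule rspan_A[OF S3 w])
    have au: "ad u = (\<lambda>x. 0)" by (rule rspan_ad0[OF S1 Z1 u])
    have av: "ad v = (\<lambda>x. 0)" by (rule rspan_ad0[OF S2 Z2 v])
    have aw: "ad w = (\<lambda>x. 0)" by (rule rspan_ad0[OF S3 Z3 w])
    have vwA: "(\<lambda>t. 1 * v t + 1 * w t) \<in> ?A" by (rule A_comb[OF vA wA])
    have xA: "(\<lambda>t. 1 * u t + 1 * (1 * v t + 1 * w t)) \<in> ?A" by (rule A_comb[OF uA vwA])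
    have "ad (\<lambda>t. 1 * v t + 1 * w t) = (\<lambda>t. 1 * ad v t + 1 * ad w t)"
      by (rule ad_add2[OF fin_ell A_fin[OF vA] A_fin[OF wA]])
    hence avw: "ad (\<lambda>t. 1 * v t + 1 * w t) = (\<lambda>x. 0)" using av aw by simp
    have "ad (\<lambda>t. 1 * u t + 1 * (1 * v t + 1 * w t)) = (\<lambda>t. 1 * ad u t + 1 * ad (\<lambda>t. 1 * v t + 1 * w t) t)"
      by (rule ad_add2[OF fin_ell A_fin[OF uA] A_fin[OF vwA]])
    hence "ad (\<lambda>t. 1 * u t + 1 * (1 * v t + 1 * w t)) = (\<lambda>x. 0)" using au avw by simp
    thus "x \<in> {v \<in> ?A. ad v = (\<lambda>x. 0)}" using xA unfolding x by simp
  qed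
next
  fix u v w :: "'a \<Rightarrow> 'r"
  assume "u \<in> rspan (pt ` ell)" "v \<in> rspan (setvec ` Qs)" "w \<in> rspan (pt ` P0')"
    "(\<lambda>t. u t + (v t + w t)) = (\<lambda>t. 0)"
  from main2_unique[OF this] show "u = (\<lambda>t. 0) \<and> v = (\<lambda>t. 0) \<and> w = (\<lambda>t. 0)" .
qed

lemma P2_eq: "{z \<in> D. z \<notin> ell \<and> card {p \<in> ell. col z p} = 2} = P2'"
proof (rule Set.set_eqI, rule iffI)
  fix z assume "z \<in> {z \<in> D. z \<notin> ell \<and> card {p \<in> ell. col z p} = 2}"
  hence z: "z \<in> D" "z \<notin> ell" "card {p \<in> ell. col z p} = 2" by blast+
  have "{p \<in> ell. col z p} \<noteq> {}"
  proof
    assume e: "{p \<in> ell. col z p} = {}"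
    have "card {p \<in> ell. col z p} = 0" unfolding e by (rule card.empty)
    thus False using z(3) by (metis zero_neq_numeral)
  qed
  thus "z \<in> P2'" unfolding P2'_def using z by blast
next
  fix z assume zP: "z \<in> P2'"
  obtain p1 p2 p3 where e: "{p1,p2,p3} = ell" and g: "goodz p1 p2 p3 z" using enum[OF zP] by blast
  have L: "tri p1 p2 p3" and c: "col z p1" "col z p2" using g unfolding goodz_def by auto
  have n: "\<not> col z p3" using goodz_full(9)[OF g] .
  have "{p \<in> ell. col z p} = {p1,p2}" using e c n by auto
  hence "card {p \<in> ell. col z p} = 2" using tri_dist[OF L] by simp
  thus "z \<in> {z \<in> D. z \<notin> ell \<and> card {p \<in> ell. col z p} = 2}" using zP unfolding P2'_def by blast
qed

end

theorem proposition5p19: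
  fixes G :: "('g, 'b) monoid_scheme" and D :: "'g set" and a b c :: 'g
    and A A0 A1 :: "('g \<Rightarrow> 'r::comm_ring_1) set" and l :: "'g set"
    and P0 P2 :: "'g set" and ad :: "('g \<Rightarrow> 'r) \<Rightarrow> 'g \<Rightarrow> 'r"
  assumes "three_transposition_group G D"
    and "symplectic_type G D"
    and "(2::'r) = 0"
    and "{a, b, c} \<in> fischer_lines G D"
  defines "l \<equiv> {a, b, c}"
    and "A \<equiv> matsuo_carrier D"
    and "ad \<equiv> mprod G D (setvec l)"
    and "A0 \<equiv> {v \<in> A. ad v = (\<lambda>x. 0)}"
    and "A1 \<equiv> {v \<in> A. ad v = v}"
    and "P0 \<equiv> {w \<in> D. w \<notin> l \<and> (\<forall>p\<in>l. \<not> fcollinear G D w p)}"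
    and "P2 \<equiv> {z \<in> D. z \<notin> l \<and> card {p \<in> l. fcollinear G D z p} = 2}"
  shows "is_direct_sum [A0, A1] A \<and>
         is_direct_sum
           [rspan (pt ` l),
            rspan (setvec ` {\<pi>. complete_quadrilateral G D \<pi> \<and> l \<subseteq> \<pi>}),
            rspan (pt ` P0)] A0 \<and>
         A1 = rspan ((\<lambda>z. ad (pt z)) ` P2)"
proof -
  interpret sfsl G D a b c
    by (rule sfsl.intro, rule sfs.intro, rule assms(2), rule sfsl_axioms.intro, rule assms(4))
  have P0e: "P0 = P0'" unfolding P0_def P0'_def l_def ..
  have P2e: "P2 = P2'" unfolding P2_def l_def by (rule P2_eq)
  have Qe: "{\<pi>. complete_quadrilateral G D \<pi> \<and> l \<subseteq> \<pi>} = Qs" unfolding Qs_def l_def ..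
  show ?thesis
    unfolding P0e P2e Qe
    unfolding A0_def A1_def A_def ad_def l_def
    using main1[OF assms(3)] main2[OF assms(3)] main3[OF assms(3)] by simp
qed


end
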